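(* Let $p$ be a prime, $q=p^r$, and let $\mathscr{C}\subseteq\mathbb{F}_q^n$ be a linear code over $\mathbb{F}_q$ of dimension $k$ with $1\le k<n$, and $\mathscr{D}\subseteq\mathbb{F}_{q^k}^m$ a linear code over $\mathbb{F}_{q^k}$ of dimension $s$ with $1\le s<m$, such that for every $1\le i\le m$ some codeword of $\mathscr{D}$ has $i$-th coordinate equal to $1$. Let $\kappa:\mathbb{F}_{q^k}\to\mathcal{L}(\mathscr{C},\mathbb{F}_p)$ be an $\mathbb{F}_p$-linear isomorphism, put $f_\lambda=\kappa(\lambda)$, and let $Q=\operatorname{span}\{\Phi_\Lambda:\Lambda\in\mathscr{D}\}\subseteq(\mathbb{C}^q)^{\otimes nm}$ with $\Phi_\Lambda$, $F_\Lambda$, $\mathscr{D}^\Theta$ and $\ell$ as defined in the context. Then $Q$ is a quantum stabilizer code of length $nm$ and dimension $q^{ks}$ (an $\llbracket nm,ks,\delta\rrbracket_q$ code) whose minimum distance is $$\delta=\min\{d(\mathscr{C}),\ell\},$$ where $d(\mathscr{C})$ is the minimum Hamming distance of $\mathscr{C}$. Moreover, the stabilizer group $\mathcal{S}$ of $Q$ is $$\mathcal{S}=\Big\{X(\mathbf{c}_1,\ldots,\mathbf{c}_m)Z(\mathbf{d}_1,\ldots,\mathbf{d}_m): (\mathbf{c}_1,\ldots,\mathbf{c}_m)\in\textstyle\bigcap_{\Lambda\in\mathscr{D}}\ker(F_\Lambda),\ \mathbf{d}_1,\ldots,\mathbf{d}_m\in\mathscr{C}^\perp\Big\},$$ and its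 centralizer in $\mathcal{P}_{nm}$ is $$C_{\mathcal{P}_{nm}}(\mathcal{S})=\{\omega^cX(\mathbf{u}_1,\ldots,\mathbf{u}_m)Z(\mathbf{v}_1,\ldots,\mathbf{v}_m): \omega^c \text{ an admissible phase},\ \mathbf{u}_1,\ldots,\mathbf{u}_m\in\mathscr{C},\ (\mathbf{v}_1,\ldots,\mathbf{v}_m)\in\mathscr{D}^\Theta\}.$$
   Context: Notation: $\operatorname{tr}:\mathbb{F}_q\to\mathbb{F}_p$ is the trace; for vectors $\mathbf{u},\mathbf{v}$ over $\mathbb{F}_q$ of equal length, $\mathbf{u}.\mathbf{v}=\sum_i u_iv_i$; $\mathscr{C}^\perp$ is the Euclidean dual of $\mathscr{C}$ in $\mathbb{F}_q^n$; $\zeta=e^{2\pi i/p}$. Qudits: $\mathbb{C}^q$ has orthonormal basis $\{|x\rangle:x\in\mathbb{F}_q\}$ and $(\mathbb{C}^q)^{\otimes N}$ has basis $|\mathbf{x}\rangle$, $\mathbf{x}\in\mathbb{F}_q^N$. Operators: $X(a)|x\rangle=|x+a\rangle$, $Z(b)|x\rangle=\zeta^{\operatorname{tr}(bx)}|x\rangle$, and for $\mathbf{a},\mathbf{b}\in\mathbb{F}_q^N$, $X(\mathbf{a})=X(a_1)\otimes\cdots\otimes X(a_N)$, $Z(\mathbf{b})=Z(b_1)\otimes\cdots\otimes Z(b_N)$. The error group $\mathcal{P}_N$ consists of $\omega^cX(\mathbf{a})Z(\mathbf{b})$ with $\mathbf{a},\mathbf{b}\in\mathbb{F}_q^N$,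 where the admissible phases are $\omega^c$ with $\omega=\zeta$, $c\in\mathbb{F}_p$ if $p$ is odd, and $\omega=i$, $c\in\{0,1,2,3\}$ if $p=2$. Its center $\mathcal{Z}(\mathcal{P}_N)$ is the set of scalar elements. The weight of $\omega^cX(\mathbf{a})Z(\mathbf{b})$ is the number of $j$ with $(a_j,b_j)\ne(0,0)$. For a subspace $Q$, its stabilizer group is $\operatorname{Stab}(Q)=\{E\in\mathcal{P}_N: Ev=v\ \forall v\in Q\}$; $Q$ is a stabilizer code if $Q=\{v:Ev=v\ \forall E\in\operatorname{Stab}(Q)\}$. For a stabilizer code with stabilizer $\mathcal{S}$, its minimum distance is $\min\{\operatorname{wt}(E):E\in C_{\mathcal{P}_N}(\mathcal{S})\setminus\mathcal{S}\mathcal{Z}(\mathcal{P}_N)\}$ (and $\min\{\operatorname{wt}(E):E\in\mathcal{S}\setminus\{I\}\}$ if $\mathcal{S}\mathcal{Z}(\mathcal{P}_N)= C_{\mathcal{P}_N}(\mathcal{S})$). An $\llbracket N,K,\delta\rrbracket_q$ code has length $N$, dimension $q^K$ and minimum distance $\delta$. Construction: $\mathcal{L}(\mathscr{C},\mathbb{F}_p)$ is the $\mathbb{F}_p$-space of $\mathbb{F}_p$-linear maps $\mathscr{C}\to\mathbb{F}_p$ (of size $q^k$), and $\mathbb{F}_{q^k}$ is viewed as an $\mathbb{F}_p$-space. For $\lambda\in\mathbb{F}_{q^k}$, $\phi_\lambda=q^{-k/2}\sum_{\mathbf{c}\in\mathscr{C}}\zeta^{f_\lambda(\mathbf{c})}|\mathbf{c}\rangle\in(\mathbb{C}^q)^{\otimes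 n}$, and for $\Lambda=(\lambda_1,\ldots,\lambda_m)\in\mathscr{D}$, $\Phi_\Lambda=\phi_{\lambda_1}\otimes\cdots\otimes\phi_{\lambda_m}$ and $F_\Lambda:\mathscr{C}^m\to\mathbb{F}_p$, $F_\Lambda(\mathbf{c}_1,\ldots,\mathbf{c}_m)=\sum_i f_{\lambda_i}(\mathbf{c}_i)$. For $\lambda\in\mathbb{F}_{q^k}$ let $\Theta(\lambda)=\{\mathbf{x}\in\mathbb{F}_q^n: f_\lambda(\mathbf{c})=\operatorname{tr}(\mathbf{c}.\mathbf{x})\ \forall\mathbf{c}\in\mathscr{C}\}$ (a coset of $\mathscr{C}^\perp$), and $\mathscr{D}^\Theta=\bigcup_{(\lambda_1,\ldots,\lambda_m)\in\mathscr{D}}\Theta(\lambda_1)\times\cdots\times\Theta(\lambda_m)\subseteq\mathbb{F}_q^{nm}$. Finally $\ell=\min\{\operatorname{wt}(\mathbf{X}):\mathbf{X}\in\mathscr{D}^\Theta\setminus(\mathscr{C}^\perp)^m\}$, where $\operatorname{wt}$ is the Hamming weight in $\mathbb{F}_q^{nm}$. *)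

theory Defs
  imports "HOL-Analysis.Analysis" "HOL-Library.Function_Algebras"
begin

text \<open>Vectors of length N over a field are functions nat => field vanishing from N on.\<close>
definition vecs :: "nat \<Rightarrow> (nat \<Rightarrow> 'a::zero) set" where
  "vecs N = {x. \<forall>i. N \<le> i \<longrightarrow> x i = 0}"

definition vscale :: "'a::times \<Rightarrow> (nat \<Rightarrow> 'a) \<Rightarrow> (nat \<Rightarrow> 'a)" where
  "vscale c x = (\<lambda>i. c * x i)"

definition dotp :: "nat \<Rightarrow> (nat \<Rightarrow> 'a::comm_ring_1) \<Rightarrow> (nat \<Rightarrow> 'a) \<Rightarrow> 'a" where
  "dotp N u v = (\<Sum>i<N. u i * v i)"

definition hw :: "nat \<Rightarrow> (nat \<Rightarrow> 'a::zero) \<Rightarrow> nat" where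
  "hw N x = card {i. i < N \<and> x i \<noteq> 0}"

definition lin_code :: "nat \<Rightarrow> (nat \<Rightarrow> 'a::field) set \<Rightarrow> bool" where
  "lin_code n C \<longleftrightarrow> C \<subseteq> vecs n \<and> module.subspace vscale C"

definition code_dim :: "(nat \<Rightarrow> 'a::field) set \<Rightarrow> nat" where
  "code_dim C = vector_space.dim vscale C"

definition min_dist :: "nat \<Rightarrow> (nat \<Rightarrow> 'a::ab_group_add) set \<Rightarrow> nat" where
  "min_dist n C = Min {hw n (x - y) | x y. x \<in> C \<and> y \<in> C \<and> x \<noteq> y}"

definition dual :: "nat \<Rightarrow> (nat \<Rightarrow> 'a::comm_ring_1) set \<Rightarrow> (nat \<Rightarrow> 'a) set" where
  "dual n C = {x \<in> vecs n. \<forall>c\<in>C. dotp n c x = 0}"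

text \<open>i-th block of length n of a vector of length n*m, and A^m inside F^(nm).\<close>
definition block :: "nat \<Rightarrow> nat \<Rightarrow> (nat \<Rightarrow> 'a::zero) \<Rightarrow> (nat \<Rightarrow> 'a)" where
  "block n i X = (\<lambda>t. if t < n then X (i * n + t) else 0)"

definition blocks_in :: "nat \<Rightarrow> nat \<Rightarrow> (nat \<Rightarrow> 'a::zero) set \<Rightarrow> (nat \<Rightarrow> 'a) set" where
  "blocks_in n m A = {X \<in> vecs (n * m). \<forall>i<m. block n i X \<in> A}"

definition Fp :: "nat \<Rightarrow> 'a::field set" where
  "Fp p = {of_nat j | j. j < p}"

definition tr :: "nat \<Rightarrow> nat \<Rightarrow> 'a::field \<Rightarrow> 'a" where
  "tr p r x = (\<Sum>i<r. x ^ (p ^ i))"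

definition zeta :: "nat \<Rightarrow> complex" where
  "zeta p = cis (2 * pi / real p)"

text \<open>zeta^t for t in F_p (t = of_nat j with 0 <= j < p).\<close>
definition zpow :: "nat \<Rightarrow> 'a::field \<Rightarrow> complex" where
  "zpow p t = zeta p ^ (THE j. j < p \<and> of_nat j = t)"

text \<open>F_p-linear maps C -> F_p, represented as functions vanishing outside C.\<close>
definition lin_maps :: "nat \<Rightarrow> (nat \<Rightarrow> 'a::field) set \<Rightarrow> ((nat \<Rightarrow> 'a) \<Rightarrow> 'a) set" where
  "lin_maps p C = {g. (\<forall>x\<in>C. \<forall>y\<in>C. g (x + y) = g x + g y)
                    \<and> (\<forall>a\<in>Fp p. \<forall>x\<in>C. g (vscale a x) = a * g x)
                    \<and> (\<forall>x\<in>C. g x \<in> Fp p)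
                    \<and> (\<forall>x. x \<notin> C \<longrightarrow> g x = 0)}"

definition Theta :: "nat \<Rightarrow> nat \<Rightarrow> nat \<Rightarrow> (nat \<Rightarrow> 'a::field) set \<Rightarrow> ((nat \<Rightarrow> 'a) \<Rightarrow> 'a) \<Rightarrow> (nat \<Rightarrow> 'a) set" where
  "Theta p r n C f = {x \<in> vecs n. \<forall>c\<in>C. f c = tr p r (dotp n c x)}"

definition DTheta :: "nat \<Rightarrow> nat \<Rightarrow> nat \<Rightarrow> nat \<Rightarrow> (nat \<Rightarrow> 'a::field) set \<Rightarrow> ('b \<Rightarrow> (nat \<Rightarrow> 'a) \<Rightarrow> 'a)
     \<Rightarrow> (nat \<Rightarrow> 'b) set \<Rightarrow> (nat \<Rightarrow> 'a) set" where
  "DTheta p r n m C \<kappa> D = (\<Union>\<Lambda>\<in>D. {X \<in> vecs (n * m). \<forall>i<m. block n i X \<in> Theta p r n C (\<kappa> (\<Lambda> i))})"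

definition ell :: "nat \<Rightarrow> nat \<Rightarrow> nat \<Rightarrow> nat \<Rightarrow> (nat \<Rightarrow> 'a::field) set \<Rightarrow> ('b \<Rightarrow> (nat \<Rightarrow> 'a) \<Rightarrow> 'a)
     \<Rightarrow> (nat \<Rightarrow> 'b) set \<Rightarrow> nat" where
  "ell p r n m C \<kappa> D = Min (hw (n * m) ` (DTheta p r n m C \<kappa> D - blocks_in n m (dual n C)))"

text \<open>Quantum states in (C^q)^(tensor N): coefficient functions on F_q^N.\<close>
type_synonym 'a qstate = "(nat \<Rightarrow> 'a) \<Rightarrow> complex"

definition Hsp :: "nat \<Rightarrow> 'a::zero qstate set" where
  "Hsp N = {\<psi>. \<forall>x. x \<notin> vecs N \<longrightarrow> \<psi> x = 0}"

definition cscale :: "complex \<Rightarrow> 'a qstate \<Rightarrow> 'a qstate" where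
  "cscale c \<psi> = (\<lambda>x. c * \<psi> x)"

definition phi :: "nat \<Rightarrow> nat \<Rightarrow> (nat \<Rightarrow> 'a::{field,finite}) set \<Rightarrow> ((nat \<Rightarrow> 'a) \<Rightarrow> 'a) \<Rightarrow> 'a qstate" where
  "phi p k C f = (\<lambda>x. if x \<in> C
      then complex_of_real (1 / sqrt (real (CARD('a) ^ k))) * zpow p (f x) else 0)"

definition Phi :: "nat \<Rightarrow> nat \<Rightarrow> nat \<Rightarrow> (nat \<Rightarrow> 'a::{field,finite}) set \<Rightarrow> ('b \<Rightarrow> (nat \<Rightarrow> 'a) \<Rightarrow> 'a)
     \<Rightarrow> (nat \<Rightarrow> 'b) \<Rightarrow> 'a qstate" where
  "Phi p n m C \<kappa> \<Lambda> = (\<lambda>X. if X \<in> vecs (n * m)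
      then (\<Prod>i<m. phi p (code_dim C) C (\<kappa> (\<Lambda> i)) (block n i X)) else 0)"

definition FLam :: "nat \<Rightarrow> nat \<Rightarrow> ('b \<Rightarrow> (nat \<Rightarrow> 'a) \<Rightarrow> 'a::field) \<Rightarrow> (nat \<Rightarrow> 'b) \<Rightarrow> (nat \<Rightarrow> 'a) \<Rightarrow> 'a" where
  "FLam n m \<kappa> \<Lambda> X = (\<Sum>i<m. \<kappa> (\<Lambda> i) (block n i X))"

definition phases :: "nat \<Rightarrow> complex set" where
  "phases p = (if p = 2 then {\<i> ^ c | c. c < 4} else {zeta p ^ c | c. c < p})"

text \<open>The operator w X(a) Z(b) on (C^q)^(tensor N): X(a)Z(b)|x> = zeta^tr(b.x) |x+a>.\<close>
definition pauli :: "nat \<Rightarrow> nat \<Rightarrow> nat \<Rightarrow> complex \<Rightarrow> (nat \<Rightarrow> 'a::field) \<Rightarrow> (nat \<Rightarrow> 'a)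
     \<Rightarrow> 'a qstate \<Rightarrow> 'a qstate" where
  "pauli p r N w a b = (\<lambda>\<psi> y. w * zpow p (tr p r (dotp N b (y - a))) * \<psi> (y - a))"

definition PG :: "nat \<Rightarrow> nat \<Rightarrow> nat \<Rightarrow> ('a::field qstate \<Rightarrow> 'a qstate) set" where
  "PG p r N = {pauli p r N w a b | w a b. w \<in> phases p \<and> a \<in> vecs N \<and> b \<in> vecs N}"

definition pweight :: "nat \<Rightarrow> nat \<Rightarrow> nat \<Rightarrow> ('a::field qstate \<Rightarrow> 'a qstate) \<Rightarrow> nat" where
  "pweight p r N E = (LEAST t. \<exists>w a b. w \<in> phases p \<and> a \<in> vecs N \<and> b \<in> vecs N
        \<and> E = pauli p r N w a b \<and> t = card {j. j < N \<and> (a j \<noteq> 0 \<or> b j \<noteq> 0)})"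

definition centralizer :: "('x \<Rightarrow> 'x) set \<Rightarrow> ('x \<Rightarrow> 'x) set \<Rightarrow> ('x \<Rightarrow> 'x) set" where
  "centralizer G S = {E \<in> G. \<forall>F\<in>S. E \<circ> F = F \<circ> E}"

definition center :: "('x \<Rightarrow> 'x) set \<Rightarrow> ('x \<Rightarrow> 'x) set" where
  "center G = centralizer G G"

definition setprod :: "('x \<Rightarrow> 'x) set \<Rightarrow> ('x \<Rightarrow> 'x) set \<Rightarrow> ('x \<Rightarrow> 'x) set" where
  "setprod A B = {E \<circ> F | E F. E \<in> A \<and> F \<in> B}"

definition Stab :: "nat \<Rightarrow> nat \<Rightarrow> nat \<Rightarrow> 'a::field qstate set \<Rightarrow> ('a qstate \<Rightarrow> 'a qstate) set" where
  "Stab p r N Q = {E \<in> PG p r N. \<forall>v\<in>Q. E v = v}"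

definition is_stabilizer_code :: "nat \<Rightarrow> nat \<Rightarrow> nat \<Rightarrow> 'a::field qstate set \<Rightarrow> bool" where
  "is_stabilizer_code p r N Q \<longleftrightarrow> Q \<subseteq> Hsp N \<and> module.subspace cscale Q
     \<and> Q = {v \<in> Hsp N. \<forall>E\<in>Stab p r N Q. E v = v}"

definition stab_min_dist :: "nat \<Rightarrow> nat \<Rightarrow> nat \<Rightarrow> 'a::field qstate set \<Rightarrow> nat" where
  "stab_min_dist p r N Q =
    (let S = Stab p r N Q; Cs = centralizer (PG p r N) S; SZ = setprod S (center (PG p r N)) in
     if SZ = Cs then Min (pweight p r N ` (S - {id}))
     else Min (pweight p r N ` (Cs - SZ)))"

end

theory Submission
  imports Defs "HOL-Computational_Algebra.Polynomial" "HOL-Computational_Algebra.Primes" "HOL-Number_Theory.Cong"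
begin


lemma sum_app: "finite A \<Longrightarrow> (\<Sum>i\<in>A. f i) x = (\<Sum>i\<in>A. f i x)"
  by (induction A rule: finite_induct) auto

lemma zeta_pow: "zeta p ^ j = cis (2 * pi * real j / real p)"
proof -
  have "zeta p ^ j = cis (real j * (2 * pi / real p))" unfolding zeta_def by (rule Complex.DeMoivre)
  then show ?thesis by (simp add: field_simps)
qed

lemma zeta_pow_eq_1: assumes "p > 0" shows "zeta p ^ j = 1 \<longleftrightarrow> p dvd j"
proof
  assume "p dvd j" then obtain t where "j = p * t" by auto
  then have "2 * pi * real j / real p = 2 * pi * real t" using assms by (simp add: field_simps)
  then show "zeta p ^ j = 1" unfolding zeta_pow by (simp add: Ints_of_nat)
next
  assume "zeta p ^ j = 1"
  then have "exp (\<i> * complex_of_real (2 * pi * real j / real p)) = 1" unfolding zeta_pow cis_conv_exp by simp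
  then obtain t :: int where t: "2 * pi * real j / real p = of_int (2 * t) * pi" 
    unfolding exp_eq_1 by auto
  then have "real j = real p * of_int t" using assms by (simp add: field_simps)
  then have "int j = int p * t" by (metis of_int_eq_iff of_int_mult of_int_of_nat_eq)
  then show "p dvd j" by (metis dvd_triv_left int_dvd_int_iff)
qed

lemma CHAR_dvd_CARD': "CHAR('a::{field,finite}) dvd CARD('a)"
proof -
  let ?c = "CHAR('a)"
  have cpos: "?c > 0" by (rule finite_imp_CHAR_pos) simp
  define H where "H = range (of_nat :: nat \<Rightarrow> 'a)"
  have H_eq: "H = of_nat ` {..<?c}"
  proof -
    have "(of_nat j :: 'a) = of_nat (j mod ?c)" for j
      using of_nat_eq_iff_cong_CHAR[where 'a='a] by (simp add: cong_def)
    then have "(of_nat j :: 'a) \<in> of_nat ` {..<?c}" for j using cpos by (metis imageI lessThan_iff mod_less_divisor)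
    then show ?thesis unfolding H_def by auto
  qed
  have cardH: "card H = ?c" unfolding H_eq
    by (subst card_image) (auto simp: inj_on_def of_nat_eq_iff_cong_CHAR cong_def)
  have Hadd: "x \<in> H \<Longrightarrow> y \<in> H \<Longrightarrow> x + y \<in> H" for x y unfolding H_def by (auto simp flip: of_nat_add)
  have Hneg: "x \<in> H \<Longrightarrow> - x \<in> H" for x
  proof -
    assume "x \<in> H" then obtain j where j: "x = of_nat j" unfolding H_def by auto
    have "(of_nat (?c * j - j) :: 'a) = of_nat (?c * j) - of_nat j" using cpos by (simp add: of_nat_diff)
    then have "(of_nat (?c * j - j) :: 'a) = - x" using j by simp
    then show ?thesis unfolding H_def by (metis rangeI)
  qed
  define CC where "CC = (\<lambda>x. (\<lambda>h. x + h) ` H) ` (UNIV :: 'a set)"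
  have U: "\<Union>CC = UNIV"
  proof -
    have "x \<in> (\<lambda>h. x + h) ` H" for x :: 'a unfolding H_def by (rule image_eqI[of _ _ 0]) (simp, metis of_nat_0 rangeI)
    then show ?thesis unfolding CC_def by blast
  qed
  have "?c * card CC = card (\<Union>CC)"
  proof (rule card_partition)
    show "finite CC" "finite (\<Union>CC)" by simp_all
    have cardc: "card ((\<lambda>h. x + h) ` H) = ?c" for x
      using cardH by (subst card_image) (auto simp: inj_on_def)
    show "card c = ?c" if "c \<in> CC" for c using that unfolding CC_def using cardc by auto
    show "c1 \<inter> c2 = {}" if c1: "c1 \<in> CC" and c2: "c2 \<in> CC" and ne: "c1 \<noteq> c2" for c1 c2
    proof -
      obtain x where x: "c1 = (\<lambda>h. x + h) ` H" using c1 CC_def by auto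
      obtain y where y: "c2 = (\<lambda>h. y + h) ` H" using c2 CC_def by auto
      show "c1 \<inter> c2 = {}"
      proof (rule ccontr)
        assume "c1 \<inter> c2 \<noteq> {}"
        then obtain h1 h2 where h: "h1 \<in> H" "h2 \<in> H" "x + h1 = y + h2" using x y by auto
        have d: "x - y \<in> H" "y - x \<in> H"
        proof -
          have "x - y = h2 + - h1" using h(3) by (simp add: algebra_simps)
          then show "x - y \<in> H" using Hadd[OF h(2) Hneg[OF h(1)]] by simp
          have "y - x = h1 + - h2" using h(3) by (simp add: algebra_simps)
          then show "y - x \<in> H" using Hadd[OF h(1) Hneg[OF h(2)]] by simp
        qed
        have "c1 \<subseteq> c2"
        proof
          fix t assume "t \<in> c1" then obtain h where "h \<in> H" "t = x + h" using x by auto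
          then show "t \<in> c2" using y d Hadd by (auto intro!: image_eqI[of _ _ "(x - y) + h"])
        qed
        moreover have "c2 \<subseteq> c1"
        proof
          fix t assume "t \<in> c2" then obtain h where "h \<in> H" "t = y + h" using y by auto
          then show "t \<in> c1" using x d Hadd by (auto intro!: image_eqI[of _ _ "(y - x) + h"])
        qed
        ultimately show False using ne by simp
      qed
    qed
  qed
  then show ?thesis using U by (metis dvd_triv_left)
qed

locale ff =
  fixes p r :: nat and C :: "(nat \<Rightarrow> 'a::{field,finite}) set"
  assumes prime_p: "prime p" and r1: "r \<ge> 1" and cardA: "CARD('a) = p ^ r"
begin

lemma p_gt1: "p > 1" using prime_p prime_gt_1_nat by blast

lemma CHAR_p: "CHAR('a) = p"
proof -
  have pos: "CHAR('a) > 0" by (rule finite_imp_CHAR_pos) simp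
  have pr: "prime CHAR('a)" using prime_CHAR_semidom[OF pos] by simp
  have "CHAR('a) dvd p ^ r" using CHAR_dvd_CARD'[where 'a='a] cardA by simp
  then have "CHAR('a) dvd p" using pr prime_dvd_power by blast
  then show ?thesis using pr prime_p by (simp add: primes_dvd_imp_eq)
qed

lemma of_nat_p: "(of_nat p :: 'a) = 0" using of_nat_CHAR[where 'a='a] CHAR_p by simp

lemma of_nat_mod: "(of_nat (j mod p) :: 'a) = of_nat j"
proof -
  have "(of_nat j :: 'a) = of_nat (j mod p + p * (j div p))" by simp
  also have "\<dots> = of_nat (j mod p)" by (simp only: of_nat_add of_nat_mult of_nat_p) simp
  finally show ?thesis by simp
qed

lemma of_nat_inj: assumes "a < p" "b < p" "(of_nat a :: 'a) = of_nat b" shows "a = b"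
proof -
  have "[a = b] (mod p)" using assms(3) of_nat_eq_iff_cong_CHAR[where 'a='a] CHAR_p by simp
  then show ?thesis using assms(1,2) by (simp add: cong_def)
qed

lemma Fp_eq: "(Fp p :: 'a set) = of_nat ` {..<p}" unfolding Fp_def by auto

lemma Fp_of_nat[simp]: "(of_nat j :: 'a) \<in> Fp p"
  unfolding Fp_def using p_gt1 by (auto intro!: exI[of _ "j mod p"] simp: of_nat_mod)

lemma Fp_cases: assumes "(x::'a) \<in> Fp p" obtains j where "x = of_nat j" using assms unfolding Fp_def by auto

lemma Fp_0[simp]: "(0::'a) \<in> Fp p" using Fp_of_nat[of 0] by simp
lemma Fp_1[simp]: "(1::'a) \<in> Fp p" using Fp_of_nat[of 1] by simp
lemma Fp_add[simp]: "(x::'a) \<in> Fp p \<Longrightarrow> y \<in> Fp p \<Longrightarrow> x + y \<in> Fp p"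
  by (metis Fp_cases Fp_of_nat of_nat_add)
lemma Fp_mult[simp]: "(x::'a) \<in> Fp p \<Longrightarrow> y \<in> Fp p \<Longrightarrow> x * y \<in> Fp p"
  by (metis Fp_cases Fp_of_nat of_nat_mult)
lemma Fp_uminus[simp]: assumes "(x::'a) \<in> Fp p" shows "- x \<in> Fp p"
proof -
  obtain j where j: "x = of_nat j" using assms Fp_cases by blast
  have "j \<le> p * j" using p_gt1 by simp
  then have "(of_nat (p * j - j) :: 'a) = of_nat (p * j) - of_nat j" by (simp add: of_nat_diff)
  also have "\<dots> = - x" using j of_nat_p by simp
  finally show ?thesis by (metis Fp_of_nat)
qed
lemma Fp_diff[simp]: "(x::'a) \<in> Fp p \<Longrightarrow> y \<in> Fp p \<Longrightarrow> x - y \<in> Fp p"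
  using Fp_add[of x "-y"] by simp
lemma Fp_sum[simp]: "(\<And>i. i \<in> I \<Longrightarrow> (f i :: 'a) \<in> Fp p) \<Longrightarrow> sum f I \<in> Fp p"
  by (induction I rule: infinite_finite_induct) auto

lemma zpow_of_nat: "zpow p (of_nat j :: 'a) = zeta p ^ j"
proof -
  have "(THE j'. j' < p \<and> (of_nat j' :: 'a) = of_nat j) = j mod p"
    using p_gt1 of_nat_inj of_nat_mod by (intro the_equality) auto
  then have "zpow p (of_nat j :: 'a) = zeta p ^ (j mod p)" unfolding zpow_def by simp
  also have "\<dots> = zeta p ^ j"
  proof -
    have "zeta p ^ j = zeta p ^ (j mod p + p * (j div p))" by simp
    also have "\<dots> = zeta p ^ (j mod p) * (zeta p ^ p) ^ (j div p)" by (simp only: power_add power_mult)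
    also have "zeta p ^ p = 1" using zeta_pow_eq_1[of p p] p_gt1 by simp
    finally show ?thesis by simp
  qed
  finally show ?thesis .
qed

lemma zpow_add: "(x::'a) \<in> Fp p \<Longrightarrow> y \<in> Fp p \<Longrightarrow> zpow p (x + y) = zpow p x * zpow p y"
  by (metis Fp_cases of_nat_add power_add zpow_of_nat)

lemma zpow_0[simp]: "zpow p (0::'a) = 1" using zpow_of_nat[of 0] by simp

lemma zpow_nz[simp]: "zpow p (x::'a) \<noteq> 0"
  unfolding zpow_def zeta_def by simp

lemma zpow_eq_1: assumes "(x::'a) \<in> Fp p" shows "zpow p x = 1 \<longleftrightarrow> x = 0"
proof -
  obtain j where j: "x = of_nat j" using assms Fp_cases by blast
  have "zpow p x = 1 \<longleftrightarrow> p dvd j" using j zpow_of_nat zeta_pow_eq_1 p_gt1 by simp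
  also have "\<dots> \<longleftrightarrow> x = 0" using j of_nat_eq_0_iff_char_dvd[where 'a='a] CHAR_p by simp
  finally show ?thesis .
qed

lemma zpow_minus: assumes "(x::'a) \<in> Fp p" shows "zpow p (- x) * zpow p x = 1"
  using zpow_add[of "-x" x] assms by simp

lemma zpow_diff: assumes "(x::'a) \<in> Fp p" "y \<in> Fp p" shows "zpow p (x - y) = zpow p x * zpow p (- y)"
  using zpow_add[of x "-y"] assms by simp

lemma zpow_sum: assumes "finite I" "\<And>i. i \<in> I \<Longrightarrow> (f i :: 'a) \<in> Fp p"
  shows "zpow p (sum f I) = (\<Prod>i\<in>I. zpow p (f i))"
  using assms by (induction I rule: finite_induct) (auto simp: zpow_add)

lemma zpow_inj: assumes "(x::'a) \<in> Fp p" "y \<in> Fp p" "zpow p x = zpow p y" shows "x = y"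
proof -
  have "zpow p (x - y) = zpow p (- y) * zpow p y" using assms zpow_diff[of x y] by (simp add: mult.commute)
  then have "zpow p (x - y) = 1" using zpow_minus[of y] assms by simp
  then show ?thesis using zpow_eq_1[of "x - y"] assms by simp
qed

end


context ff begin

lemma pow_card: "(x::'a) ^ CARD('a) = x"
proof (cases "x = 0")
  case False
  have "x * (\<Prod>y\<in>UNIV-{0}. x * y) = x * x ^ (card (UNIV :: 'a set) - 1) * \<Prod>(UNIV-{0})"
    by (simp add: prod.distrib mult_ac)
  also have "x * x ^ (card (UNIV :: 'a set) - 1) = x ^ Suc (card (UNIV :: 'a set) - 1)"
    by (subst power_Suc) auto
  also have "Suc (card (UNIV :: 'a set) - 1) = card (UNIV :: 'a set)"
    using finite_UNIV_card_ge_0[where ?'a = 'a] by simp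
  also have "(\<Prod>y\<in>UNIV-{0}. x * y) = (\<Prod>y\<in>UNIV-{0}. y)"
    by (rule prod.reindex_bij_witness[of _ "\<lambda>y. y / x" "\<lambda>y. x * y"]) (use False in auto)
  finally show ?thesis
    by simp
qed (use finite_UNIV_card_ge_0[where ?'a = 'a] in auto)

lemma prime_CHAR: "prime CHAR('a)" using CHAR_p prime_p by simp

lemma frob: "((x::'a) + y) ^ (p ^ i) = x ^ (p ^ i) + y ^ (p ^ i)"
  using freshmans_dream'[OF prime_CHAR, of "p ^ i" i] CHAR_p by simp

lemma Fp_pow1: assumes "(a::'a) \<in> Fp p" shows "a ^ p = a"
proof -
  obtain j where j: "a = of_nat j" using assms Fp_cases by blast
  have "(of_nat j :: 'a) ^ p = of_nat j"
  proof (induction j)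
    case 0 then show ?case using p_gt1 by simp
  next
    case (Suc j)
    have "(of_nat (Suc j) :: 'a) ^ p = (of_nat j + 1) ^ (p ^ 1)" by (simp add: add.commute)
    also have "\<dots> = of_nat j ^ p + 1" unfolding frob by simp
    finally show ?case using Suc by simp
  qed
  then show ?thesis using j by simp
qed

lemma Fp_pow: assumes "(a::'a) \<in> Fp p" shows "a ^ (p ^ i) = a"
proof (induction i)
  case (Suc i)
  have "a ^ (p ^ Suc i) = (a ^ (p ^ i)) ^ p" by (simp add: power_mult[symmetric] mult.commute)
  then show ?case using Suc Fp_pow1[OF assms] by simp
qed simp

lemma tr_add: "tr p r ((x::'a) + y) = tr p r x + tr p r y"
  unfolding tr_def frob by (simp add: sum.distrib)

lemma tr_0[simp]: "tr p r (0::'a) = 0"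
  unfolding tr_def using p_gt1 by (simp add: power_0_left)

lemma tr_uminus: "tr p r (- (x::'a)) = - tr p r x"
  using minus_unique[of "tr p r x" "tr p r (-x)"] tr_add[of x "-x"] by simp

lemma tr_diff: "tr p r ((x::'a) - y) = tr p r x - tr p r y"
  using tr_add[of x "-y"] tr_uminus[of y] by simp

lemma tr_sum: "tr p r (sum (f :: _ \<Rightarrow> 'a) I) = (\<Sum>i\<in>I. tr p r (f i))"
  by (induction I rule: infinite_finite_induct) (auto simp: tr_add)

lemma tr_smult: assumes "(a::'a) \<in> Fp p" shows "tr p r (a * x) = a * tr p r x"
  unfolding tr_def by (simp add: power_mult_distrib Fp_pow[OF assms] sum_distrib_left)

lemma card_Fp: "card (Fp p :: 'a set) = p"
  unfolding Fp_eq using of_nat_inj by (subst card_image) (auto simp: inj_on_def)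

lemma pow_p_imp_Fp: assumes "(y::'a) ^ p = y" shows "y \<in> Fp p"
proof -
  define P :: "'a poly" where "P = Polynomial.monom 1 p + [:0, -1:]"
  have dP: "degree P = p" unfolding P_def using p_gt1
    by (subst degree_add_eq_left) (auto simp: degree_monom_eq)
  then have P0: "P \<noteq> 0" using p_gt1 by auto
  have ev: "poly P x = x ^ p - x" for x unfolding P_def by (simp add: poly_monom)
  have sub: "Fp p \<subseteq> {x. poly P x = 0}" using Fp_pow1 ev by auto
  have fin: "finite {x. poly P x = 0}" using poly_roots_finite[OF P0] .
  have "card {x. poly P x = 0} \<le> p" using card_poly_roots_bound[OF P0] dP by simp
  then have "Fp p = {x. poly P x = 0}" using card_subset_eq[OF fin sub] card_Fp card_mono[OF fin sub] by simp
  then show ?thesis using assms ev by auto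
qed

lemma tr_Fp[simp]: "tr p r (x::'a) \<in> Fp p"
proof -
  have "tr p r x ^ p = (\<Sum>i<r. (x ^ (p ^ i)) ^ p)"
    unfolding tr_def by (rule freshmans_dream_sum[OF prime_CHAR CHAR_p[symmetric]])
  also have "\<dots> = (\<Sum>i<r. x ^ (p ^ Suc i))" by (simp add: power_mult[symmetric] mult.commute)
  also have "\<dots> = tr p r x"
  proof -
    have "(\<Sum>i<Suc r. x ^ (p ^ i)) = x ^ (p ^ 0) + (\<Sum>i<r. x ^ (p ^ Suc i))" by (rule sum.lessThan_Suc_shift)
    moreover have "(\<Sum>i<Suc r. x ^ (p ^ i)) = (\<Sum>i<r. x ^ (p ^ i)) + x ^ (p ^ r)" by simp
    moreover have "x ^ (p ^ r) = x" using pow_card cardA by simp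
    ultimately show ?thesis unfolding tr_def by simp
  qed
  finally show ?thesis by (rule pow_p_imp_Fp)
qed

lemma tr_nonzero: "\<exists>u::'a. tr p r u \<noteq> 0"
proof (rule ccontr)
  assume H: "\<not> (\<exists>u::'a. tr p r u \<noteq> 0)"
  define P :: "'a poly" where "P = (\<Sum>i<r. Polynomial.monom 1 (p ^ i))"
  have ev: "poly P x = tr p r x" for x unfolding P_def tr_def by (simp add: poly_sum poly_monom)
  have inj: "inj (\<lambda>i. p ^ i)" using p_gt1 by (auto simp: inj_on_def)
  have "Polynomial.coeff P (p ^ (r - 1)) = (\<Sum>i<r. if p ^ i = p ^ (r - 1) then 1 else 0)"
    unfolding P_def coeff_sum by simp
  also have "\<dots> = (\<Sum>i\<in>{r - 1}. 1)"
    using r1 inj[unfolded inj_on_def] by (intro sum.mono_neutral_cong_right) auto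
  finally have "Polynomial.coeff P (p ^ (r - 1)) = 1" by simp
  then have P0: "P \<noteq> 0" by auto
  have "degree P \<le> p ^ (r - 1)" unfolding P_def
  proof (rule degree_sum_le)
    fix i assume "i \<in> {..<r}"
    then have "p ^ i \<le> p ^ (r - 1)" using p_gt1 by (intro power_increasing) auto
    then show "degree (Polynomial.monom (1::'a) (p ^ i)) \<le> p ^ (r - 1)"
      using degree_monom_le order.trans by blast
  qed simp
  moreover have "card {x. poly P x = 0} \<le> degree P" by (rule card_poly_roots_bound[OF P0])
  moreover have "{x. poly P x = 0} = UNIV" using H ev by auto
  moreover have "p ^ (r - 1) < p ^ r" using p_gt1 r1 by (simp add: power_strict_increasing)
  ultimately show False using cardA by simp
qed

end


section \<open>Vectors\<close>

lemma vecs_add[simp]: "x \<in> vecs N \<Longrightarrow> y \<in> vecs N \<Longrightarrow> (x::nat \<Rightarrow> 'a::monoid_add) + y \<in> vecs N" by (simp add: vecs_def)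
lemma vecs_diff[simp]: "x \<in> vecs N \<Longrightarrow> y \<in> vecs N \<Longrightarrow> (x::nat \<Rightarrow> 'a::ab_group_add) - y \<in> vecs N" by (simp add: vecs_def)
lemma vecs_uminus[simp]: "x \<in> vecs N \<Longrightarrow> - (x::nat \<Rightarrow> 'a::ab_group_add) \<in> vecs N" by (simp add: vecs_def)
lemma vecs_0[simp]: "0 \<in> vecs N" by (simp add: vecs_def)
lemma vecs_vscale[simp]: "x \<in> vecs N \<Longrightarrow> vscale (c::'a::mult_zero) x \<in> vecs N" by (simp add: vecs_def vscale_def)

lemma finite_vecs: "finite (vecs N :: (nat \<Rightarrow> 'a::{zero,finite}) set)"
proof -
  have "vecs N = {f :: nat \<Rightarrow> 'a. \<forall>x. (x \<in> {..<N} \<longrightarrow> f x \<in> UNIV) \<and> (x \<notin> {..<N} \<longrightarrow> f x = 0)}"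
    by (auto simp: vecs_def)
  then show ?thesis using finite_set_of_finite_funs[of "{..<N}" "UNIV :: 'a set" 0] by simp
qed

lemma dotp_add_left: "dotp N (x + y) z = dotp N x z + dotp N y z"
  by (simp add: dotp_def sum.distrib algebra_simps)
lemma dotp_add_right: "dotp N z (x + y) = dotp N z x + dotp N z y"
  by (simp add: dotp_def sum.distrib algebra_simps)
lemma dotp_diff_left: "dotp N (x - y) z = dotp N x z - dotp N y z"
  by (simp add: dotp_def sum_subtractf algebra_simps)
lemma dotp_diff_right: "dotp N z (x - y) = dotp N z x - dotp N z y"
  by (simp add: dotp_def sum_subtractf algebra_simps)
lemma dotp_0_left[simp]: "dotp N 0 z = 0" by (simp add: dotp_def)
lemma dotp_0_right[simp]: "dotp N z 0 = 0" by (simp add: dotp_def)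
lemma dotp_comm: "dotp N x y = dotp N y x" by (simp add: dotp_def mult.commute)
lemma dotp_vscale_left: "dotp N (vscale c x) y = c * dotp N x y"
  by (simp add: dotp_def vscale_def sum_distrib_left mult.assoc)

definition sv :: "nat \<Rightarrow> 'a::zero \<Rightarrow> nat \<Rightarrow> 'a" where "sv j c = (\<lambda>i. if i = j then c else 0)"
lemma sv_vecs: "j < N \<Longrightarrow> sv j c \<in> vecs N" by (auto simp: sv_def vecs_def)
lemma dotp_sv: "j < N \<Longrightarrow> dotp N v (sv j c) = v j * c"
  unfolding dotp_def sv_def by (simp add: if_distrib[of "\<lambda>t. v _ * t"] sum.delta' cong: if_cong)

lemma block_add: "block n i (X + Y) = block n i X + block n i (Y::nat \<Rightarrow> 'a::monoid_add)" by (auto simp: block_def fun_eq_iff)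
lemma block_diff: "block n i (X - Y) = block n i X - block n i (Y :: nat \<Rightarrow> 'a::ab_group_add)" by (auto simp: block_def fun_eq_iff)
lemma block_0[simp]: "block n i 0 = 0" by (auto simp: block_def)
lemma block_vecs[simp]: "block n i X \<in> vecs n" by (auto simp: block_def vecs_def)

definition emb :: "nat \<Rightarrow> nat \<Rightarrow> (nat \<Rightarrow> 'a::zero) \<Rightarrow> nat \<Rightarrow> 'a" where
  "emb n i x = (\<lambda>j. if i * n \<le> j \<and> j < i * n + n then x (j - i * n) else 0)"

lemma emb_vecs: assumes "i < m" shows "emb n i x \<in> vecs (n * m)"
proof -
  have "i * n + n \<le> n * m" using assms
    by (metis add.commute mult.commute mult_Suc_right mult_le_mono2 Suc_le_eq)
  then show ?thesis by (auto simp: emb_def vecs_def)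
qed

lemma block_emb: assumes "x \<in> vecs n" shows "block n i' (emb n i x) = (if i' = i then x else 0)"
proof (rule ext)
  fix t
  show "block n i' (emb n i x) t = (if i' = i then x else 0) t"
  proof (cases "t < n")
    case True
    have "i * n \<le> i' * n + t \<and> i' * n + t < i * n + n \<longleftrightarrow> i' = i"
    proof
      assume H: "i * n \<le> i' * n + t \<and> i' * n + t < i * n + n"
      then have "i * n < (i' + 1) * n" "i' * n < (i + 1) * n" using True by (auto simp: algebra_simps)
      then have "i < i' + 1" "i' < i + 1" using mult_less_cancel2 by blast+
      then show "i' = i" by simp
    qed (use True in auto)
    then show ?thesis using True by (auto simp: block_def emb_def)
  next
    case False
    then show ?thesis using assms by (auto simp: block_def vecs_def)
  qed
qed

lemma emb_add: "emb n i (x + y) = emb n i x + emb n i (y::nat \<Rightarrow> 'a::monoid_add)" by (auto simp: emb_def fun_eq_iff)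
lemma emb_0[simp]: "emb n i 0 = 0" by (auto simp: emb_def)

lemma sum_blocks: fixes g :: "nat \<Rightarrow> 'a::comm_monoid_add" shows "(\<Sum>j<n * m. g j) = (\<Sum>i<m. \<Sum>t<n. g (i * n + t))"
proof -
  have "(\<Sum>j<n * m. g j) = (\<Sum>i<m. sum g {i * n..<i * n + n})"
    using sum.nat_group[where g=g and k=n and n=m] by (simp add: mult.commute)
  also have "\<dots> = (\<Sum>i<m. \<Sum>t<n. g (i * n + t))"
  proof (rule sum.cong[OF refl])
    fix i
    have "sum g {0 + i * n..<n + i * n} = (\<Sum>t = 0..<n. g (t + i * n))" by (rule sum.shift_bounds_nat_ivl)
    then show "sum g {i * n..<i * n + n} = (\<Sum>t<n. g (i * n + t))"
      by (simp add: add.commute atLeast0LessThan)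
  qed
  finally show ?thesis .
qed

lemma dotp_blocks: "dotp (n * m) b x = (\<Sum>i<m. dotp n (block n i b) (block n i x))"
  unfolding dotp_def sum_blocks by (auto simp: block_def intro!: sum.cong)

lemma dotp_emb: assumes "i < m" "c \<in> vecs n"
  shows "dotp (n * m) b (emb n i c) = dotp n (block n i b) c"
proof -
  have "dotp (n * m) b (emb n i c) = (\<Sum>i'<m. dotp n (block n i' b) (if i' = i then c else 0))"
    unfolding dotp_blocks block_emb[OF assms(2)] ..
  also have "\<dots> = (\<Sum>i'<m. if i' = i then dotp n (block n i' b) c else 0)"
    by (intro sum.cong) auto
  also have "\<dots> = dotp n (block n i b) c" using assms(1) by simp
  finally show ?thesis .
qed

lemma blocks_zero: assumes "X \<in> vecs (n * m)" "\<forall>i<m. block n i X = 0" shows "X = 0"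
proof (rule ext)
  fix j
  show "X j = 0 j"
  proof (cases "j < n * m")
    case True
    then have n0: "n > 0" by (cases n) auto
    have im: "j div n < m" using True by (simp add: div_less_iff_less_mult mult.commute n0)
    have "block n (j div n) X (j mod n) = X ((j div n) * n + j mod n)" using n0 by (simp add: block_def)
    also have "(j div n) * n + j mod n = j" by simp
    finally show ?thesis using assms(2) im by (metis zero_fun_def)
  next
    case False then show ?thesis using assms(1) by (simp add: vecs_def)
  qed
qed

lemma blocks_eq: assumes "X \<in> vecs (n * m)" "Y \<in> vecs (n * m)" "\<forall>i<m. block n i X = block n i (Y :: nat \<Rightarrow> 'a::ab_group_add)"
  shows "X = Y"
  using blocks_zero[of "X - Y" n m] assms by (simp add: block_diff)



context ff begin

abbreviation "z \<equiv> zpow p :: 'a \<Rightarrow> complex"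
abbreviation "trr \<equiv> tr p r :: 'a \<Rightarrow> 'a"

lemma ND: assumes "(v::nat \<Rightarrow> 'a) \<in> vecs N" "\<forall>x\<in>vecs N. trr (dotp N v x) = 0" shows "v = 0"
proof (rule ccontr)
  assume "v \<noteq> 0"
  then obtain j where j: "v j \<noteq> 0" by (auto simp: fun_eq_iff)
  have "\<forall>i\<ge>N. v i = 0" using assms(1) by (simp add: vecs_def)
  then have jN: "j < N" using j leI by blast
  obtain u0 :: 'a where u0: "trr u0 \<noteq> 0" using tr_nonzero by blast
  have "dotp N v (sv j (u0 / v j)) = v j * (u0 / v j)" by (rule dotp_sv[OF jN])
  also have "\<dots> = u0" using j by simp
  finally have "dotp N v (sv j (u0 / v j)) = u0" .
  then show False using assms(2) sv_vecs[OF jN] u0 by metis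
qed

lemma pauli_comp:
  "pauli p r N w a b \<circ> pauli p r N w' a' b' =
   pauli p r N (w * w' * z (trr (dotp N b a'))) (a + a') ((b :: nat \<Rightarrow> 'a) + b')"
proof (rule ext, rule ext)
  fix \<psi> :: "'a qstate" and y
  have e1: "trr (dotp N b (y - a)) = trr (dotp N b a') + trr (dotp N b (y - (a + a')))"
    by (simp add: tr_add[symmetric] dotp_diff_right dotp_add_right)
  have e2: "trr (dotp N (b + b') (y - (a + a'))) = trr (dotp N b (y - (a + a'))) + trr (dotp N b' (y - (a + a')))"
    by (simp add: tr_add[symmetric] dotp_add_left)
  show "(pauli p r N w a b \<circ> pauli p r N w' a' b') \<psi> y = pauli p r N (w * w' * z (trr (dotp N b a'))) (a + a') (b + b') \<psi> y"
    unfolding pauli_def comp_def e2 zpow_add[OF tr_Fp tr_Fp] diff_diff_eq e1 by (simp add: ac_simps)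
qed

lemma pauli_apply1: "pauli p r N w a (b::nat \<Rightarrow> 'a) (\<lambda>_. 1) a = w"
  by (simp add: pauli_def)

lemma pauli_commute: assumes "w \<noteq> 0" "w' \<noteq> 0"
  shows "pauli p r N w a b \<circ> pauli p r N w' a' b' = pauli p r N w' a' b' \<circ> pauli p r N w a b
     \<longleftrightarrow> trr (dotp N b a') = trr (dotp N b' (a::nat \<Rightarrow> 'a))"
proof
  assume H: "pauli p r N w a b \<circ> pauli p r N w' a' b' = pauli p r N w' a' b' \<circ> pauli p r N w a b"
  have "w * w' * z (trr (dotp N b a')) = w' * w * z (trr (dotp N b' a))"
    using arg_cong[OF H, of "\<lambda>E. E (\<lambda>_. 1) (a + a')"] unfolding pauli_comp
    by (simp add: pauli_apply1 add.commute)
  then have "z (trr (dotp N b a')) = z (trr (dotp N b' a))" using assms by (simp add: mult.commute)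
  then show "trr (dotp N b a') = trr (dotp N b' a)" by (rule zpow_inj[OF tr_Fp tr_Fp])
next
  assume "trr (dotp N b a') = trr (dotp N b' a)"
  then show "pauli p r N w a b \<circ> pauli p r N w' a' b' = pauli p r N w' a' b' \<circ> pauli p r N w a b"
    unfolding pauli_comp by (simp add: ac_simps)
qed

lemma pauli_inj: assumes "w \<noteq> 0" "a \<in> vecs N" "a' \<in> vecs N" "b \<in> vecs N" "b' \<in> vecs N"
  and eq: "pauli p r N w a b = pauli p r N w' a' (b' :: nat \<Rightarrow> 'a)"
  shows "w = w' \<and> a = a' \<and> b = b'"
proof -
  let ?d = "\<lambda>x::nat \<Rightarrow> 'a. if x = 0 then (1::complex) else 0"
  have "pauli p r N w a b ?d a = w" by (simp add: pauli_def)
  moreover have "pauli p r N w' a' b' ?d a = (if a - a' = 0 then w' * z (trr (dotp N b' (a - a'))) else 0)"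
    by (simp add: pauli_def)
  ultimately have aa: "a = a'" using eq assms(1) by (metis right_minus_eq)
  have ww: "w = w'" using eq aa pauli_apply1 by metis
  have "b - b' = 0"
  proof (rule ND[of _ N])
    show "b - b' \<in> vecs N" using assms by simp
    show "\<forall>x\<in>vecs N. trr (dotp N (b - b') x) = 0"
    proof
      fix x :: "nat \<Rightarrow> 'a"
      have "pauli p r N w a b (\<lambda>_. 1) (x + a) = pauli p r N w' a' b' (\<lambda>_. 1) (x + a)" using eq by simp
      then have "z (trr (dotp N b x)) = z (trr (dotp N b' x))" using aa ww assms(1) by (simp add: pauli_def)
      then have "trr (dotp N b x) = trr (dotp N b' x)" by (rule zpow_inj[OF tr_Fp tr_Fp])
      then show "trr (dotp N (b - b') x) = 0" by (simp add: dotp_diff_left tr_diff)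
    qed
  qed
  then show ?thesis using aa ww by simp
qed

lemma phases_1: "1 \<in> phases p" unfolding phases_def using p_gt1 by (auto intro: exI[of _ 0])
lemma phases_nz: "w \<in> phases p \<Longrightarrow> w \<noteq> 0" unfolding phases_def zeta_def by (auto split: if_splits)
lemma finite_phases: "finite (phases p)" unfolding phases_def by auto

lemma finite_PG: "finite (PG p r N :: ('a qstate \<Rightarrow> 'a qstate) set)"
proof -
  have "(PG p r N :: ('a qstate \<Rightarrow> 'a qstate) set) \<subseteq> (\<lambda>(w, a, b). pauli p r N w a b) ` (phases p \<times> (vecs N :: (nat \<Rightarrow> 'a) set) \<times> (vecs N :: (nat \<Rightarrow> 'a) set))"
  proof
    fix E :: "'a qstate \<Rightarrow> 'a qstate" assume "E \<in> PG p r N"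
    then obtain w a b where H: "E = pauli p r N w a b" "w \<in> phases p" "a \<in> vecs N" "(b::nat\<Rightarrow>'a) \<in> vecs N"
      unfolding PG_def by blast
    show "E \<in> (\<lambda>(w, a, b). pauli p r N w a b) ` (phases p \<times> (vecs N :: (nat \<Rightarrow> 'a) set) \<times> (vecs N :: (nat \<Rightarrow> 'a) set))"
      using H by (intro image_eqI[of _ _ "(w, a, b)"]) auto
  qed
  then show ?thesis using finite_phases finite_vecs by (meson finite_SigmaI finite_imageI finite_subset)
qed

lemma pweight_pauli: assumes "w \<in> phases p" "a \<in> vecs N" "b \<in> vecs N"
  shows "pweight p r N (pauli p r N w a (b :: nat \<Rightarrow> 'a)) = card {j. j < N \<and> (a j \<noteq> 0 \<or> b j \<noteq> 0)}"
  unfolding pweight_def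
proof (rule Least_equality)
  show "\<exists>w' a' b'. w' \<in> phases p \<and> a' \<in> vecs N \<and> b' \<in> vecs N \<and> pauli p r N w a b = pauli p r N w' a' b' \<and>
          card {j. j < N \<and> (a j \<noteq> 0 \<or> b j \<noteq> 0)} = card {j. j < N \<and> (a' j \<noteq> 0 \<or> b' j \<noteq> 0)}"
    using assms by blast
next
  fix y assume "\<exists>w' a' b'. w' \<in> phases p \<and> a' \<in> vecs N \<and> b' \<in> vecs N \<and> pauli p r N w a b = pauli p r N w' a' b' \<and>
          y = card {j. j < N \<and> (a' j \<noteq> 0 \<or> b' j \<noteq> 0)}"
  then obtain w' a' b' where H: "a' \<in> vecs N" "b' \<in> vecs N" "pauli p r N w a b = pauli p r N w' a' b'"
    "y = card {j. j < N \<and> (a' j \<noteq> 0 \<or> b' j \<noteq> 0)}" by blast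
  then have "a = a' \<and> b = b'" using pauli_inj[OF phases_nz[OF assms(1)] assms(2) H(1) assms(3) H(2) H(3)] by simp
  then show "card {j. j < N \<and> (a j \<noteq> 0 \<or> b j \<noteq> 0)} \<le> y" using H by simp
qed

lemma pauli_scalar: "pauli p r N w 0 0 = (\<lambda>\<psi> y. w * \<psi> (y :: nat \<Rightarrow> 'a))"
  by (simp add: pauli_def)

lemma center_PG: "center (PG p r N :: ('a qstate \<Rightarrow> 'a qstate) set) = {pauli p r N w 0 0 | w. w \<in> phases p}"
proof
  show "center (PG p r N) \<subseteq> ({pauli p r N w 0 0 | w. w \<in> phases p} :: ('a qstate \<Rightarrow> 'a qstate) set)"
  proof
    fix E :: "'a qstate \<Rightarrow> 'a qstate" assume E: "E \<in> center (PG p r N)"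
    then obtain w a b where Ed: "E = pauli p r N w a b" "w \<in> phases p" "a \<in> vecs N" "(b::nat \<Rightarrow> 'a) \<in> vecs N"
      unfolding center_def centralizer_def PG_def by blast
    have wn: "w \<noteq> 0" using phases_nz Ed by simp
    have comm: "trr (dotp N b a') = trr (dotp N b' a)" if "a' \<in> vecs N" "b' \<in> vecs N" for a' b'
    proof -
      have "pauli p r N 1 a' b' \<in> PG p r N" using that phases_1 unfolding PG_def by blast
      then have "E \<circ> pauli p r N 1 a' b' = pauli p r N 1 a' b' \<circ> E" using E unfolding center_def centralizer_def by blast
      then show ?thesis using pauli_commute[OF wn, of 1] Ed(1) by simp
    qed
    have "a = 0"
      using comm[of 0] by (intro ND[OF Ed(3)]) (auto simp: dotp_comm)
    moreover have "b = 0"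
      using comm[of _ 0] by (intro ND[OF Ed(4)]) auto
    ultimately show "E \<in> {pauli p r N w 0 0 | w. w \<in> phases p}" using Ed by blast
  qed
next
  show "{pauli p r N w 0 0 | w. w \<in> phases p} \<subseteq> (center (PG p r N) :: ('a qstate \<Rightarrow> 'a qstate) set)"
  proof
    fix E :: "'a qstate \<Rightarrow> 'a qstate" assume "E \<in> {pauli p r N w 0 0 | w. w \<in> phases p}"
    then obtain w where Ed: "E = pauli p r N w 0 0" "w \<in> phases p" by blast
    have "E \<in> PG p r N" using Ed unfolding PG_def by force
    moreover have "E \<circ> F = F \<circ> E" if FP: "F \<in> PG p r N" for F :: "'a qstate \<Rightarrow> 'a qstate"
    proof -
      obtain w' a b where "F = pauli p r N w' a (b::nat \<Rightarrow> 'a)" "w' \<in> phases p" using FP unfolding PG_def by blast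
      then show ?thesis using pauli_commute[where N=N and w=w and w'=w' and a=0 and b=0 and a'=a and b'=b] phases_nz Ed by simp
    qed
    ultimately show "E \<in> center (PG p r N)" unfolding center_def centralizer_def by blast
  qed
qed

lemma pauli_add: "pauli p r N w a b (\<psi>1 + \<psi>2) = pauli p r N w a (b::nat \<Rightarrow> 'a) \<psi>1 + pauli p r N w a b \<psi>2"
  by (simp add: pauli_def fun_eq_iff algebra_simps)
lemma pauli_cscale: "pauli p r N w a b (cscale c \<psi>) = cscale c (pauli p r N w a (b::nat \<Rightarrow> 'a) \<psi>)"
  by (simp add: pauli_def cscale_def fun_eq_iff algebra_simps)

section \<open>Character sums\<close>

lemma CS:
  fixes G :: "'g::ab_group_add set" and ch :: "'g \<Rightarrow> 'a"
  assumes fin: "finite G" and cl: "\<And>x y. x \<in> G \<Longrightarrow> y \<in> G \<Longrightarrow> x + y \<in> G"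
    and add: "\<And>x y. x \<in> G \<Longrightarrow> y \<in> G \<Longrightarrow> ch (x + y) = ch x + ch y"
    and val: "\<And>x. x \<in> G \<Longrightarrow> ch x \<in> Fp p"
    and x0: "x0 \<in> G" "ch x0 \<noteq> 0"
  shows "(\<Sum>x\<in>G. z (ch x)) = 0"
proof -
  let ?S = "\<Sum>x\<in>G. z (ch x)"
  have img: "(\<lambda>x. x + x0) ` G = G"
    by (rule endo_inj_surj[OF fin]) (use cl x0 in \<open>auto simp: inj_on_def\<close>)
  have "?S = (\<Sum>x\<in>(\<lambda>x. x + x0) ` G. z (ch x))" using img by simp
  also have "\<dots> = (\<Sum>x\<in>G. z (ch (x + x0)))"
    by (subst sum.reindex) (auto simp: inj_on_def)
  also have "\<dots> = (\<Sum>x\<in>G. z (ch x) * z (ch x0))"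
    by (intro sum.cong refl) (simp add: add x0 val zpow_add)
  also have "\<dots> = ?S * z (ch x0)" by (simp add: sum_distrib_right)
  finally have "?S * (z (ch x0) - 1) = 0" by (simp add: algebra_simps)
  moreover have "z (ch x0) \<noteq> 1" using zpow_eq_1[OF val[OF x0(1)]] x0(2) by simp
  ultimately show ?thesis by simp
qed

lemma CSA:
  fixes G :: "'g::ab_group_add set" and ch :: "'g \<Rightarrow> 'a"
  assumes fin: "finite G" and cl: "\<And>x y. x \<in> G \<Longrightarrow> y \<in> G \<Longrightarrow> x + y \<in> G"
    and add: "\<And>x y. x \<in> G \<Longrightarrow> y \<in> G \<Longrightarrow> ch (x + y) = ch x + ch y"
    and val: "\<And>x. x \<in> G \<Longrightarrow> ch x \<in> Fp p"
  shows "(\<Sum>x\<in>G. z (ch x)) = (if \<forall>x\<in>G. ch x = 0 then of_nat (card G) else 0)"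
  using CS[OF fin cl add val] by auto

lemma DUAL:
  fixes A :: "'g::ab_group_add set" and G :: "'h::ab_group_add set" and h :: "'g \<Rightarrow> 'h \<Rightarrow> 'a" and g :: "'h \<Rightarrow> 'a"
  assumes finA: "finite A" and clA: "\<And>x y. x \<in> A \<Longrightarrow> y \<in> A \<Longrightarrow> x + y \<in> A" and A0: "0 \<in> A"
    and finG: "finite G" and clG: "\<And>x y. x \<in> G \<Longrightarrow> y \<in> G \<Longrightarrow> x + y \<in> G" and G0: "0 \<in> G"
    and hA: "\<And>a a' x. a \<in> A \<Longrightarrow> a' \<in> A \<Longrightarrow> x \<in> G \<Longrightarrow> h (a + a') x = h a x + h a' x"
    and hG: "\<And>a x x'. a \<in> A \<Longrightarrow> x \<in> G \<Longrightarrow> x' \<in> G \<Longrightarrow> h a (x + x') = h a x + h a x'"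
    and hv: "\<And>a x. a \<in> A \<Longrightarrow> x \<in> G \<Longrightarrow> h a x \<in> Fp p"
    and gG: "\<And>x x'. x \<in> G \<Longrightarrow> x' \<in> G \<Longrightarrow> g (x + x') = g x + g x'"
    and gv: "\<And>x. x \<in> G \<Longrightarrow> g x \<in> Fp p"
    and ker: "\<And>x. x \<in> G \<Longrightarrow> (\<forall>a\<in>A. h a x = 0) \<Longrightarrow> g x = 0"
  shows "\<exists>a\<in>A. \<forall>x\<in>G. h a x = g x"
proof (rule ccontr)
  assume H: "\<not> (\<exists>a\<in>A. \<forall>x\<in>G. h a x = g x)"
  let ?T = "\<Sum>a\<in>A. \<Sum>x\<in>G. z (h a x - g x)"
  have "?T = (\<Sum>a\<in>A. 0)"
  proof (rule sum.cong[OF refl])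
    fix a assume a: "a \<in> A"
    then obtain x0 where x0: "x0 \<in> G" "h a x0 \<noteq> g x0" using H by blast
    show "(\<Sum>x\<in>G. z (h a x - g x)) = 0"
      by (rule CS[OF finG clG, of _ x0]) (use a x0 hG gG hv gv in auto)
  qed
  then have T0: "?T = 0" by simp
  let ?K = "{x\<in>G. \<forall>a\<in>A. h a x = 0}"
  have "?T = (\<Sum>x\<in>G. \<Sum>a\<in>A. z (h a x) * z (- g x))"
    by (subst sum.swap) (intro sum.cong refl, simp add: zpow_diff hv gv)
  also have "\<dots> = (\<Sum>x\<in>G. z (- g x) * (\<Sum>a\<in>A. z (h a x)))"
    by (simp add: sum_distrib_left mult.commute)
  also have "\<dots> = (\<Sum>x\<in>G. if x \<in> ?K then of_nat (card A) else 0)"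
  proof (rule sum.cong[OF refl])
    fix x assume x: "x \<in> G"
    have "(\<Sum>a\<in>A. z (h a x)) = (if \<forall>a\<in>A. h a x = 0 then of_nat (card A) else 0)"
      by (rule CSA[OF finA clA]) (use x hA hv in auto)
    then show "z (- g x) * (\<Sum>a\<in>A. z (h a x)) = (if x \<in> ?K then of_nat (card A) else 0)"
      using ker[OF x] x by auto
  qed
  also have "\<dots> = of_nat (card ?K) * of_nat (card A)"
    using finG by (simp add: sum.If_cases Int_def)
  finally have "of_nat (card ?K) * of_nat (card A) = (0::complex)" using T0 by simp
  moreover have "card A > 0" using finA A0 card_gt_0_iff by blast
  moreover have "card ?K > 0"
  proof -
    have "h a 0 = 0" if "a \<in> A" for a
    proof -
      have "h a (0 + 0) = h a 0 + h a 0" using hG[OF that G0 G0] .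
      then show ?thesis by (metis add_cancel_right_right add_0)
    qed
    then have "0 \<in> ?K" using G0 by simp
    then show ?thesis using finG card_gt_0_iff by fastforce
  qed
  ultimately show False by simp
qed

end


lemma mod_vscale: "module (vscale :: 'f::field \<Rightarrow> (nat \<Rightarrow> 'f) \<Rightarrow> _)"
  by unfold_locales (auto simp: vscale_def fun_eq_iff algebra_simps)
lemma mod_cscale: "module (cscale :: complex \<Rightarrow> 'x qstate \<Rightarrow> _)"
  by unfold_locales (auto simp: cscale_def fun_eq_iff algebra_simps)
lemma vs_vscale: "vector_space (vscale :: 'f::field \<Rightarrow> (nat \<Rightarrow> 'f) \<Rightarrow> _)"
  using mod_vscale unfolding vector_space_def module_def .
lemma vs_cscale: "vector_space (cscale :: complex \<Rightarrow> 'x qstate \<Rightarrow> _)"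
  using mod_cscale unfolding vector_space_def module_def .

lemma subspace_facts: assumes "module.subspace (vscale :: 'f::field \<Rightarrow> _) V"
  shows "0 \<in> V" "\<And>x y. x \<in> V \<Longrightarrow> y \<in> V \<Longrightarrow> x + y \<in> V" "\<And>c x. x \<in> V \<Longrightarrow> vscale c x \<in> V"
  using assms by (auto simp: module.subspace_def[OF mod_vscale])

lemma lin_code_facts:
  assumes "lin_code N (V :: (nat \<Rightarrow> 'f::field) set)"
  shows "V \<subseteq> vecs N" "0 \<in> V" "\<And>x y. x \<in> V \<Longrightarrow> y \<in> V \<Longrightarrow> x + y \<in> V"
    "\<And>c x. x \<in> V \<Longrightarrow> vscale c x \<in> V"
    "\<And>x y. x \<in> V \<Longrightarrow> y \<in> V \<Longrightarrow> x - y \<in> V"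
    "\<And>x. x \<in> V \<Longrightarrow> - x \<in> V"
proof -
  have sub: "module.subspace vscale V" and VN: "V \<subseteq> vecs N" using assms unfolding lin_code_def by auto
  show "V \<subseteq> vecs N" "0 \<in> V" using subspace_facts[OF sub] VN by auto
  show add: "\<And>x y. x \<in> V \<Longrightarrow> y \<in> V \<Longrightarrow> x + y \<in> V" using subspace_facts[OF sub] by auto
  show sc: "\<And>c x. x \<in> V \<Longrightarrow> vscale c x \<in> V" using subspace_facts[OF sub] by auto
  have neg: "- x = vscale (-1) x" for x :: "nat \<Rightarrow> 'f" by (simp add: vscale_def fun_eq_iff)
  show ng: "- x \<in> V" if "x \<in> V" for x
  proof -
    have "vscale (-1) x \<in> V" using sc that by blast
    then show ?thesis using neg[of x] by simp
  qed
  show "x - y \<in> V" if "x \<in> V" "y \<in> V" for x y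
  proof -
    have "x + - y \<in> V" using add ng that by blast
    then show ?thesis by simp
  qed
qed

locale qs = ff +
  fixes n m k s :: nat and D :: "(nat \<Rightarrow> 'b::{field,finite}) set" and \<kappa> :: "'b \<Rightarrow> (nat \<Rightarrow> 'a::{field,finite}) \<Rightarrow> 'a"
  assumes cardB: "CARD('b) = CARD('a) ^ k"
    and linC: "lin_code n C" and dimC: "code_dim C = k" and k1: "1 \<le> k" and kn: "k < n"
    and linD: "lin_code m D" and dimD: "code_dim D = s" and s1: "1 \<le> s" and sm: "s < m"
    and D1: "\<forall>i<m. \<exists>d\<in>D. d i = 1"
    and kadd: "\<forall>u v. \<kappa> (u + v) = \<kappa> u + \<kappa> v"
    and kbij: "bij_betw \<kappa> UNIV (lin_maps p C)"
begin

abbreviation "N \<equiv> n * m"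
abbreviation "Cm \<equiv> blocks_in n m C"
abbreviation "Dm \<equiv> blocks_in n m (dual n C)"
abbreviation "FL \<equiv> FLam n m \<kappa>"
definition "K = {X \<in> Cm. \<forall>\<Lambda>\<in>D. FL \<Lambda> X = 0}"

lemmas Cf = lin_code_facts[OF linC]
lemmas Df = lin_code_facts[OF linD]

lemma finite_C: "finite C" using Cf(1) finite_vecs finite_subset by blast
lemma finite_D: "finite D" using Df(1) finite_vecs finite_subset by blast
lemma m_pos: "m > 0" using s1 sm by simp

lemma Cm_vecs: "X \<in> Cm \<Longrightarrow> X \<in> vecs N" by (simp add: blocks_in_def)
lemma Cm_0: "0 \<in> Cm" by (simp add: blocks_in_def Cf(2))
lemma Cm_add: "X \<in> Cm \<Longrightarrow> Y \<in> Cm \<Longrightarrow> X + Y \<in> Cm" by (simp add: blocks_in_def block_add Cf(3))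
lemma Cm_diff: "X \<in> Cm \<Longrightarrow> Y \<in> Cm \<Longrightarrow> X - Y \<in> Cm" by (simp add: blocks_in_def block_diff Cf(5))
lemma finite_Cm: "finite Cm" using finite_vecs[of N] by (rule finite_subset[rotated]) (auto simp: blocks_in_def)
lemma emb_Cm: "i < m \<Longrightarrow> c \<in> C \<Longrightarrow> emb n i c \<in> Cm"
  using Cf(1,2) by (auto simp: blocks_in_def emb_vecs block_emb)

lemma dual_vecs: "dual n C \<subseteq> vecs n" by (auto simp: dual_def)
lemma dual_0: "0 \<in> dual n C" by (simp add: dual_def)
lemma dual_add: "x \<in> dual n C \<Longrightarrow> y \<in> dual n C \<Longrightarrow> x + y \<in> dual n C" by (simp add: dual_def dotp_add_right)
lemma Dm_vecs: "X \<in> Dm \<Longrightarrow> X \<in> vecs N" by (simp add: blocks_in_def)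
lemma Dm_0: "0 \<in> Dm" by (simp add: blocks_in_def dual_0)
lemma emb_Dm: "i < m \<Longrightarrow> d \<in> dual n C \<Longrightarrow> emb n i d \<in> Dm"
  using dual_vecs dual_0 by (auto simp: blocks_in_def emb_vecs block_emb)

lemma dotp_C_dual: "c \<in> C \<Longrightarrow> d \<in> dual n C \<Longrightarrow> dotp n c d = 0" by (simp add: dual_def)

lemma lm: "\<kappa> u \<in> lin_maps p C" by (rule bij_betw_apply[OF kbij]) simp
lemma lm_add: "x \<in> C \<Longrightarrow> y \<in> C \<Longrightarrow> \<kappa> u (x + y) = \<kappa> u x + \<kappa> u y" using lm[of u] unfolding lin_maps_def by blast
lemma lm_val: "x \<in> C \<Longrightarrow> \<kappa> u x \<in> Fp p" using lm[of u] unfolding lin_maps_def by blast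
lemma lm_out: "x \<notin> C \<Longrightarrow> \<kappa> u x = 0" using lm[of u] unfolding lin_maps_def by blast
lemma lm_0[simp]: "\<kappa> u 0 = 0"
proof -
  have "\<kappa> u (0 + 0) = \<kappa> u 0 + \<kappa> u 0" by (rule lm_add[OF Cf(2) Cf(2)])
  then have "\<kappa> u 0 = \<kappa> u 0 + \<kappa> u 0" by (simp only: add_0)
  then show ?thesis by (simp only: add_cancel_right_right)
qed
lemma kappa_0: "\<kappa> 0 = 0"
proof -
  have "\<kappa> (0 + 0) = \<kappa> 0 + \<kappa> 0" using kadd by blast
  then have "\<kappa> 0 = \<kappa> 0 + \<kappa> 0" by (simp only: add_0)
  then show ?thesis by (simp only: add_cancel_right_right)
qed
lemma kappa_inj: "\<kappa> u = \<kappa> v \<Longrightarrow> u = v" using inj_onD[OF bij_betw_imp_inj_on[OF kbij]] by simp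
lemma kappa_surj: assumes "f \<in> lin_maps p C" shows "\<exists>u. \<kappa> u = f"
proof -
  have "f \<in> \<kappa> ` UNIV" using bij_betw_imp_surj_on[OF kbij] assms by simp
  then show ?thesis by auto
qed

lemma FL_val: "X \<in> Cm \<Longrightarrow> FL \<Lambda> X \<in> Fp p"
  unfolding FLam_def by (intro Fp_sum lm_val) (auto simp: blocks_in_def)
lemma FL_addX: "X \<in> Cm \<Longrightarrow> Y \<in> Cm \<Longrightarrow> FL \<Lambda> (X + Y) = FL \<Lambda> X + FL \<Lambda> Y"
  unfolding FLam_def by (auto simp: block_add lm_add blocks_in_def sum.distrib intro!: sum.cong)
lemma FL_addL: "FL (\<Lambda> + \<Lambda>') X = FL \<Lambda> X + FL \<Lambda>' X"
  unfolding FLam_def by (simp add: kadd sum.distrib)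
lemma FL_0X[simp]: "FL \<Lambda> 0 = 0" unfolding FLam_def by simp
lemma FL_diff: "X \<in> Cm \<Longrightarrow> Y \<in> Cm \<Longrightarrow> FL \<Lambda> (X - Y) = FL \<Lambda> X - FL \<Lambda> Y"
  using FL_addX[of "X - Y" Y \<Lambda>] Cm_diff by simp
lemma FL_emb: assumes "i < m" "c \<in> C" shows "FL \<Lambda> (emb n i c) = \<kappa> (\<Lambda> i) c"
proof -
  have "FL \<Lambda> (emb n i c) = (\<Sum>i'<m. if i' = i then \<kappa> (\<Lambda> i') c else 0)"
    unfolding FLam_def using Cf(1) assms(2) by (intro sum.cong) (auto simp: block_emb)
  then show ?thesis using assms(1) by simp
qed

lemma K_Cm: "K \<subseteq> Cm" by (auto simp: K_def)
lemma K_0: "0 \<in> K" by (simp add: K_def Cm_0)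

section \<open>Dualities\<close>

lemma SC: assumes "v \<in> vecs n" "\<forall>c\<in>C. trr (dotp n c v) = 0" shows "v \<in> dual n C"
proof -
  obtain u0 :: 'a where u0: "trr u0 \<noteq> 0" using tr_nonzero by blast
  have "dotp n c v = 0" if c: "c \<in> C" for c
  proof (rule ccontr)
    assume t: "dotp n c v \<noteq> 0"
    have "vscale (u0 / dotp n c v) c \<in> C" using Cf(4) c by blast
    moreover have "dotp n (vscale (u0 / dotp n c v) c) v = u0" using t by (simp add: dotp_vscale_left)
    ultimately show False using assms(2) u0 by metis
  qed
  then show ?thesis using assms(1) by (simp add: dual_def)
qed

lemma Dual1: assumes y: "y \<in> vecs n" and H: "\<forall>d\<in>dual n C. trr (dotp n d y) = 0" shows "y \<in> C"
proof -
  have "\<exists>c\<in>C. \<forall>x\<in>vecs n. trr (dotp n c x) = trr (dotp n y x)"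
  proof (rule DUAL[where h = "\<lambda>c x. trr (dotp n c x)"])
    show "finite C" by (rule finite_C)
    show "finite (vecs n :: (nat \<Rightarrow> 'a) set)" by (rule finite_vecs)
    fix x assume x: "x \<in> vecs n" "\<forall>c\<in>C. trr (dotp n c x) = 0"
    then have "x \<in> dual n C" by (rule SC)
    then show "trr (dotp n y x) = 0" using H by (simp add: dotp_comm)
  qed (simp_all add: Cf(2,3) dotp_add_left dotp_add_right tr_add)
  then obtain c where c: "c \<in> C" "\<forall>x\<in>vecs n. trr (dotp n c x) = trr (dotp n y x)" by blast
  have "c - y = 0"
    by (rule ND[of _ n]) (use c y Cf(1) in \<open>auto simp: dotp_diff_left tr_diff\<close>)
  then show ?thesis using c by simp
qed

lemma Dual2: assumes f: "f \<in> lin_maps p C" shows "\<exists>x\<in>vecs n. \<forall>c\<in>C. f c = trr (dotp n c x)"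
proof -
  have fa: "\<And>x y. x \<in> C \<Longrightarrow> y \<in> C \<Longrightarrow> f (x + y) = f x + f y" and fv: "\<And>x. x \<in> C \<Longrightarrow> f x \<in> Fp p"
    using f unfolding lin_maps_def by auto
  have "f (0 + 0) = f 0 + f 0" using fa[OF Cf(2) Cf(2)] .
  then have "f 0 = f 0 + f 0" by (simp only: add_0)
  then have f0: "f 0 = 0" by (simp only: add_cancel_right_right)
  have "\<exists>x\<in>vecs n. \<forall>c\<in>C. trr (dotp n c x) = f c"
  proof (rule DUAL[where h = "\<lambda>x c. trr (dotp n c x)"])
    show "finite C" by (rule finite_C)
    show "finite (vecs n :: (nat \<Rightarrow> 'a) set)" by (rule finite_vecs)
    fix c assume c: "c \<in> C" "\<forall>x\<in>vecs n. trr (dotp n c x) = 0"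
    then have "c = 0" using Cf(1) by (intro ND[of c n]) (auto simp: dotp_comm)
    then show "f c = 0" using f0 by simp
  qed (simp_all add: Cf(2,3) fa fv dotp_add_left dotp_add_right tr_add)
  then show ?thesis by metis
qed

lemma Dual3: assumes b: "b \<in> vecs N" and H: "\<forall>c\<in>K. trr (dotp N b c) = 0"
  shows "b \<in> DTheta p r n m C \<kappa> D"
proof -
  have "\<exists>\<Lambda>\<in>D. \<forall>x\<in>Cm. FL \<Lambda> x = trr (dotp N b x)"
  proof (rule DUAL[where h = "FL"])
    show "finite D" by (rule finite_D)
    show "finite Cm" by (rule finite_Cm)
    fix x assume x: "x \<in> Cm" "\<forall>\<Lambda>\<in>D. FL \<Lambda> x = 0"
    then have "x \<in> K" by (simp add: K_def)
    then show "trr (dotp N b x) = 0" using H by simp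
  qed (simp_all add: Df(2,3) Cm_0 Cm_add FL_addX FL_addL FL_val dotp_add_right tr_add)
  then obtain \<Lambda> where L: "\<Lambda> \<in> D" "\<forall>x\<in>Cm. FL \<Lambda> x = trr (dotp N b x)" by blast
  have "block n i b \<in> Theta p r n C (\<kappa> (\<Lambda> i))" if i: "i < m" for i
  proof -
    have "\<kappa> (\<Lambda> i) c = trr (dotp n c (block n i b))" if c: "c \<in> C" for c
    proof -
      have "\<kappa> (\<Lambda> i) c = FL \<Lambda> (emb n i c)" using FL_emb[OF i c] by simp
      also have "\<dots> = trr (dotp N b (emb n i c))" using L(2) emb_Cm[OF i c] by simp
      also have "\<dots> = trr (dotp n (block n i b) c)"
      proof -
        have "c \<in> vecs n" using c Cf(1) by blast
        then show ?thesis by (simp add: dotp_emb[OF i])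
      qed
      finally show ?thesis by (simp add: dotp_comm)
    qed
    then show ?thesis by (simp add: Theta_def)
  qed
  then show ?thesis unfolding DTheta_def using L(1) b by blast
qed

end


context qs begin

definition "cst = complex_of_real (1 / sqrt (real (CARD('a) ^ k)))"
definition "cm = cst ^ m"
abbreviation "PH \<equiv> Phi p n m C \<kappa>"
abbreviation "Phis \<equiv> {PH \<Lambda> | \<Lambda>. \<Lambda> \<in> D}"
definition "S0 = {pauli p r N 1 X Y | X Y. X \<in> {X \<in> Cm. \<forall>\<Lambda>\<in>D. FL \<Lambda> X = 0} \<and> Y \<in> Dm}"

lemma cst_nz: "cst \<noteq> 0" unfolding cst_def by simp
lemma cm_nz: "cm \<noteq> 0" unfolding cm_def using cst_nz by simp

lemma Phi_eval: "PH \<Lambda> X = (if X \<in> Cm then cm * z (FL \<Lambda> X) else 0)"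
proof (cases "X \<in> Cm")
  case True
  then have bl: "\<And>i. i < m \<Longrightarrow> block n i X \<in> C" by (simp add: blocks_in_def)
  have "PH \<Lambda> X = (\<Prod>i<m. cst * z (\<kappa> (\<Lambda> i) (block n i X)))"
    unfolding Phi_def phi_def dimC cst_def[symmetric]
    by (simp add: Cm_vecs[OF True], intro prod.cong) (auto simp: bl)
  also have "\<dots> = cm * (\<Prod>i<m. z (\<kappa> (\<Lambda> i) (block n i X)))"
    by (simp add: prod.distrib cm_def)
  also have "(\<Prod>i<m. z (\<kappa> (\<Lambda> i) (block n i X))) = z (FL \<Lambda> X)"
    unfolding FLam_def by (rule zpow_sum[symmetric]) (auto simp: bl lm_val)
  finally show ?thesis using True by simp
next
  case False
  show ?thesis
  proof (cases "X \<in> vecs N")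
    case True
    then obtain i where i: "i < m" "block n i X \<notin> C" using False by (auto simp: blocks_in_def)
    have "(\<Prod>i<m. phi p (code_dim C) C (\<kappa> (\<Lambda> i)) (block n i X)) = 0"
      using i by (intro prod_zero) (auto simp: phi_def)
    then show ?thesis using False True unfolding Phi_def by simp
  next
    case F2: False
    then show ?thesis using False unfolding Phi_def by simp
  qed
qed

lemma FL_0L: "FL 0 X = 0" unfolding FLam_def by (simp add: kappa_0)
lemma zero_D: "(0::nat \<Rightarrow> 'b) \<in> D" using Df(2) .

lemma Phi0_eval: "PH 0 X = (if X \<in> Cm then cm else 0)"
  unfolding Phi_eval FL_0L by simp

lemma Phi_Hsp: "PH \<Lambda> \<in> Hsp N" unfolding Hsp_def Phi_def by simp

lemma dotp_Dm_Cm: assumes "Y \<in> Dm" "X \<in> Cm" shows "dotp N Y X = 0"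
proof -
  have "dotp N Y X = (\<Sum>i<m. dotp n (block n i Y) (block n i X))" by (rule dotp_blocks)
  also have "\<dots> = 0"
  proof (rule sum.neutral, rule ballI)
    fix i assume "i \<in> {..<m}"
    then have "block n i Y \<in> dual n C" "block n i X \<in> C" using assms by (auto simp: blocks_in_def)
    then show "dotp n (block n i Y) (block n i X) = 0" using dotp_C_dual dotp_comm by metis
  qed
  finally show ?thesis .
qed

lemma fix_Phi: assumes X: "X \<in> K" and Y: "Y \<in> Dm" and L: "\<Lambda> \<in> D"
  shows "pauli p r N 1 X Y (PH \<Lambda>) = PH \<Lambda>"
proof (rule ext)
  fix y
  have XC: "X \<in> Cm" and FX: "FL \<Lambda> X = 0" using X L by (auto simp: K_def)
  show "pauli p r N 1 X Y (PH \<Lambda>) y = PH \<Lambda> y"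
  proof (cases "y \<in> Cm")
    case True
    then have yx: "y - X \<in> Cm" using Cm_diff XC by blast
    have "dotp N Y (y - X) = 0" by (rule dotp_Dm_Cm[OF Y yx])
    moreover have "FL \<Lambda> (y - X) = FL \<Lambda> y" using FL_diff[OF True XC] FX by simp
    ultimately show ?thesis using True yx unfolding pauli_def Phi_eval by simp
  next
    case False
    have "y - X \<notin> Cm"
    proof
      assume "y - X \<in> Cm"
      then have "y - X + X \<in> Cm" using Cm_add XC by blast
      then show False using False by simp
    qed
    then show ?thesis using False unfolding pauli_def Phi_eval by simp
  qed
qed

lemma subspace_fix: "module.subspace cscale {v. pauli p r N w a (b :: nat \<Rightarrow> 'a) v = v}"
  unfolding module.subspace_def[OF mod_cscale]
proof (intro conjI ballI allI)
  show "0 \<in> {v. pauli p r N w a b v = v}" by (simp add: pauli_def fun_eq_iff)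
  fix x y assume "x \<in> {v. pauli p r N w a b v = v}" "y \<in> {v. pauli p r N w a b v = v}"
  then show "x + y \<in> {v. pauli p r N w a b v = v}" by (simp add: pauli_add)
next
  fix c x assume "x \<in> {v. pauli p r N w a b v = v}"
  then show "cscale c x \<in> {v. pauli p r N w a b v = v}" by (simp add: pauli_cscale)
qed

lemma fix_span: assumes "\<And>\<psi>. \<psi> \<in> S \<Longrightarrow> pauli p r N w a (b :: nat \<Rightarrow> 'a) \<psi> = \<psi>" and "v \<in> module.span cscale S"
  shows "pauli p r N w a b v = v"
  using module.span_induct[OF mod_cscale assms(2) subspace_fix, of w a b] assms(1) by blast

lemma S0_Stab: "S0 \<subseteq> Stab p r N (module.span cscale Phis)"
proof
  fix E assume "E \<in> S0"
  then obtain X Y where E: "E = pauli p r N 1 X Y" "X \<in> K" "Y \<in> Dm" unfolding S0_def K_def by blast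
  have "E \<in> PG p r N" unfolding PG_def using E phases_1 Cm_vecs[of X] Dm_vecs[of Y] K_Cm by blast
  moreover have "E v = v" if "v \<in> module.span cscale Phis" for v
    unfolding E(1) by (rule fix_span[OF _ that]) (use fix_Phi[OF E(2,3)] in blast)
  ultimately show "E \<in> Stab p r N (module.span cscale Phis)" unfolding Stab_def by blast
qed

lemma Phi_in_span: "\<Lambda> \<in> D \<Longrightarrow> PH \<Lambda> \<in> module.span cscale Phis"
  by (rule module.span_base[OF mod_cscale]) blast

lemma Stab_S0: "Stab p r N (module.span cscale Phis) \<subseteq> S0"
proof
  fix E assume E: "E \<in> Stab p r N (module.span cscale Phis)"
  then obtain w a b where Ed: "E = pauli p r N w a b" "w \<in> phases p" "a \<in> vecs N" "(b :: nat \<Rightarrow> 'a) \<in> vecs N"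
    unfolding Stab_def PG_def by blast
  have fx: "E (PH \<Lambda>) = PH \<Lambda>" if "\<Lambda> \<in> D" for \<Lambda>
    using E Phi_in_span[OF that] unfolding Stab_def by blast
  have a0: "E (PH 0) a = PH 0 a" using fx[OF zero_D] by simp
  then have "w * cm = (if a \<in> Cm then cm else 0)" unfolding Ed(1) pauli_def Phi0_eval using Cm_0 by simp
  then have aC: "a \<in> Cm" and w1: "w = 1" using cm_nz phases_nz[OF Ed(2)] by (auto split: if_splits)
  have trb: "trr (dotp N b x) = 0" if x: "x \<in> Cm" for x
  proof -
    have xa: "x + a \<in> Cm" using Cm_add[OF x aC] .
    have "E (PH 0) (x + a) = PH 0 (x + a)" using fx[OF zero_D] by simp
    then have "z (trr (dotp N b x)) * cm = cm" unfolding Ed(1) pauli_def Phi0_eval using x xa w1 by simp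
    then have "z (trr (dotp N b x)) = 1" using cm_nz by simp
    then show ?thesis using zpow_eq_1[OF tr_Fp] by simp
  qed
  have bD: "b \<in> Dm" unfolding blocks_in_def
  proof (intro CollectI conjI allI impI)
    show "b \<in> vecs N" by (rule Ed(4))
    fix i assume i: "i < m"
    show "block n i b \<in> dual n C"
    proof (rule SC)
      show "block n i b \<in> vecs n" by simp
      show "\<forall>c\<in>C. trr (dotp n c (block n i b)) = 0"
      proof
        fix c assume c: "c \<in> C"
        have "c \<in> vecs n" using c Cf(1) by blast
        then have "dotp N b (emb n i c) = dotp n (block n i b) c" by (rule dotp_emb[OF i])
        then show "trr (dotp n c (block n i b)) = 0" using trb[OF emb_Cm[OF i c]] by (simp add: dotp_comm)
      qed
    qed
  qed
  have aK: "FL \<Lambda> a = 0" if L: "\<Lambda> \<in> D" for \<Lambda>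
  proof -
    have "E (PH \<Lambda>) a = PH \<Lambda> a" using fx[OF L] by simp
    then have "cm = cm * z (FL \<Lambda> a)" unfolding Ed(1) pauli_def Phi_eval using aC Cm_0 w1 by simp
    then have "z (FL \<Lambda> a) = 1" using cm_nz by simp
    then show ?thesis using zpow_eq_1[OF FL_val[OF aC]] by simp
  qed
  show "E \<in> S0" unfolding S0_def using Ed(1) w1 aC aK bD by blast
qed

lemma Stab_eq: "Stab p r N (module.span cscale Phis) = S0"
  using S0_Stab Stab_S0 by blast

end


context qs begin

lemma card_Cm_pos: "card Cm > 0" using finite_Cm Cm_0 card_gt_0_iff by blast
lemma card_D_pos: "card D > 0" using finite_D zero_D card_gt_0_iff by blast
lemma card_K_pos: "card K > 0" using finite_subset[OF K_Cm finite_Cm] K_0 card_gt_0_iff by blast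

lemma D_add: "x \<in> D \<Longrightarrow> y \<in> D \<Longrightarrow> x + y \<in> D" using Df(3) .

lemma sum_D_char: assumes w: "w \<in> Cm"
  shows "(\<Sum>\<Lambda>\<in>D. z (FL \<Lambda> w)) = (if w \<in> K then of_nat (card D) else 0)"
proof -
  have "(\<Sum>\<Lambda>\<in>D. z (FL \<Lambda> w)) = (if \<forall>\<Lambda>\<in>D. FL \<Lambda> w = 0 then of_nat (card D) else 0)"
    by (rule CSA[OF finite_D D_add]) (simp_all add: FL_addL FL_val[OF w])
  then show ?thesis using w by (simp add: K_def)
qed

lemma orth: assumes L: "\<Lambda> \<in> D" "\<Lambda>0 \<in> D" "\<Lambda> \<noteq> \<Lambda>0" shows "\<exists>x\<in>Cm. FL \<Lambda> x \<noteq> FL \<Lambda>0 x"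
proof -
  obtain i where i: "\<Lambda> i \<noteq> \<Lambda>0 i" using L(3) by (auto simp: fun_eq_iff)
  have im: "i < m"
  proof (rule ccontr)
    assume "\<not> i < m"
    then have "\<Lambda> i = 0" "\<Lambda>0 i = 0" using L(1,2) Df(1) by (auto simp: vecs_def)
    then show False using i by simp
  qed
  have "\<kappa> (\<Lambda> i) \<noteq> \<kappa> (\<Lambda>0 i)" using i kappa_inj by blast
  then obtain c where c: "\<kappa> (\<Lambda> i) c \<noteq> \<kappa> (\<Lambda>0 i) c" by (auto simp: fun_eq_iff)
  have cC: "c \<in> C" using c lm_out by force
  show ?thesis using emb_Cm[OF im cC] FL_emb[OF im cC] c by metis
qed

lemma pairing: assumes L: "\<Lambda> \<in> D" "\<Lambda>0 \<in> D"
  shows "(\<Sum>x\<in>Cm. z (- FL \<Lambda>0 x) * PH \<Lambda> x) = (if \<Lambda> = \<Lambda>0 then cm * of_nat (card Cm) else 0)"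
proof -
  have "(\<Sum>x\<in>Cm. z (- FL \<Lambda>0 x) * PH \<Lambda> x) = (\<Sum>x\<in>Cm. cm * z (FL \<Lambda> x - FL \<Lambda>0 x))"
  proof (rule sum.cong[OF refl])
    fix x assume x: "x \<in> Cm"
    have "z (FL \<Lambda> x - FL \<Lambda>0 x) = z (FL \<Lambda> x) * z (- FL \<Lambda>0 x)" by (rule zpow_diff[OF FL_val[OF x] FL_val[OF x]])
    then show "z (- FL \<Lambda>0 x) * PH \<Lambda> x = cm * z (FL \<Lambda> x - FL \<Lambda>0 x)" using x by (simp add: Phi_eval)
  qed
  also have "\<dots> = cm * (\<Sum>x\<in>Cm. z (FL \<Lambda> x - FL \<Lambda>0 x))" by (simp add: sum_distrib_left)
  also have "(\<Sum>x\<in>Cm. z (FL \<Lambda> x - FL \<Lambda>0 x)) = (if \<Lambda> = \<Lambda>0 then of_nat (card Cm) else 0)"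
  proof (cases "\<Lambda> = \<Lambda>0")
    case True then show ?thesis by simp
  next
    case False
    obtain x0 where x0: "x0 \<in> Cm" "FL \<Lambda> x0 \<noteq> FL \<Lambda>0 x0" using orth[OF L False] by blast
    have "(\<Sum>x\<in>Cm. z (FL \<Lambda> x - FL \<Lambda>0 x)) = 0"
      by (rule CS[OF finite_Cm Cm_add _ _ x0(1)]) (use x0 in \<open>simp_all add: FL_addX FL_val\<close>)
    then show ?thesis using False by simp
  qed
  finally show ?thesis by simp
qed

lemma sum_cscale_app: "finite A \<Longrightarrow> (\<Sum>i\<in>A. cscale (c i) (f i)) y = (\<Sum>i\<in>A. c i * f i y)"
  by (simp add: sum_app cscale_def)

lemma inj_PH: "inj_on PH D"
proof (rule inj_onI)
  fix \<Lambda> \<Lambda>' assume L: "\<Lambda> \<in> D" "\<Lambda>' \<in> D" and eq: "PH \<Lambda> = PH \<Lambda>'"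
  have "(\<Sum>x\<in>Cm. z (- FL \<Lambda>' x) * PH \<Lambda> x) = cm * of_nat (card Cm)" using eq pairing[OF L(2) L(2)] by simp
  then have "(if \<Lambda> = \<Lambda>' then cm * of_nat (card Cm) else 0) = cm * of_nat (card Cm)" using pairing[OF L] by simp
  then show "\<Lambda> = \<Lambda>'" using cm_nz card_Cm_pos by (auto split: if_splits)
qed

lemma Phis_eq: "Phis = PH ` D" by auto

lemma indep: "\<not> module.dependent cscale Phis"
proof -
  have fin: "finite Phis" unfolding Phis_eq using finite_D by simp
  show ?thesis
  proof (rule vector_space.independent_if_scalars_zero[OF vs_cscale fin])
    fix f and \<psi> assume H: "(\<Sum>x\<in>Phis. cscale (f x) x) = 0" and psi: "\<psi> \<in> Phis"
    obtain \<Lambda>0 where L0: "\<Lambda>0 \<in> D" "\<psi> = PH \<Lambda>0" using psi by blast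
    have H': "(\<Sum>\<Lambda>\<in>D. cscale (f (PH \<Lambda>)) (PH \<Lambda>)) = 0"
      using H unfolding Phis_eq by (simp add: sum.reindex[OF inj_PH])
    have "0 = (\<Sum>x\<in>Cm. z (- FL \<Lambda>0 x) * (\<Sum>\<Lambda>\<in>D. cscale (f (PH \<Lambda>)) (PH \<Lambda>)) x)" using H' by simp
    also have "\<dots> = (\<Sum>x\<in>Cm. \<Sum>\<Lambda>\<in>D. f (PH \<Lambda>) * (z (- FL \<Lambda>0 x) * PH \<Lambda> x))"
      by (simp add: sum_cscale_app[OF finite_D] sum_distrib_left mult_ac)
    also have "\<dots> = (\<Sum>\<Lambda>\<in>D. f (PH \<Lambda>) * (\<Sum>x\<in>Cm. z (- FL \<Lambda>0 x) * PH \<Lambda> x))"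
      by (subst sum.swap) (simp add: sum_distrib_left)
    also have "\<dots> = (\<Sum>\<Lambda>\<in>D. if \<Lambda> = \<Lambda>0 then f (PH \<Lambda>) * (cm * of_nat (card Cm)) else 0)"
      by (intro sum.cong refl) (simp add: pairing[OF _ L0(1)])
    also have "\<dots> = f (PH \<Lambda>0) * (cm * of_nat (card Cm))" using L0(1) finite_D by simp
    finally show "f \<psi> = 0" using L0(2) cm_nz card_Cm_pos by simp
  qed
qed

lemma card_Phis: "card Phis = card D" unfolding Phis_eq by (rule card_image[OF inj_PH])

lemma dim_Q: "vector_space.dim cscale (module.span cscale Phis) = card D"
  using vector_space.dim_span_eq_card_independent[OF vs_cscale indep] card_Phis by simp

end


context qs begin

lemma card_D: "card D = CARD('b) ^ s"
proof -
  obtain B where B: "B \<subseteq> D" "\<not> module.dependent vscale B" "D \<subseteq> module.span vscale B"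
      "card B = vector_space.dim vscale D"
    using vector_space.basis_exists[OF vs_vscale, of D] by blast
  have cB: "card B = s" using B(4) dimD unfolding code_dim_def by simp
  have finB: "finite B" using B(1) finite_D finite_subset by blast
  have subD: "module.subspace vscale D" using linD unfolding lin_code_def by simp
  have spanB: "module.span vscale B = D"
    using B(3) module.span_minimal[OF mod_vscale B(1) subD] by blast
  let ?Psi = "\<lambda>u. \<Sum>v\<in>B. vscale (u v) v"
  have img: "?Psi ` (PiE B (\<lambda>_. UNIV)) = D"
  proof
    show "?Psi ` (PiE B (\<lambda>_. UNIV)) \<subseteq> D"
      using spanB module.span_finite[OF mod_vscale finB] by auto
    show "D \<subseteq> ?Psi ` (PiE B (\<lambda>_. UNIV))"
    proof
      fix d assume "d \<in> D"
      then obtain u where u: "d = ?Psi u" using spanB module.span_finite[OF mod_vscale finB] by auto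
      have "?Psi (restrict u B) = ?Psi u" by (intro sum.cong) auto
      then have "d = ?Psi (restrict u B)" using u by simp
      moreover have "restrict u B \<in> PiE B (\<lambda>_. UNIV)" by simp
      ultimately show "d \<in> ?Psi ` (PiE B (\<lambda>_. UNIV))" by blast
    qed
  qed
  have inj: "inj_on ?Psi (PiE B (\<lambda>_. UNIV))"
  proof (rule inj_onI)
    fix u u' assume u: "u \<in> PiE B (\<lambda>_. UNIV)" and u': "u' \<in> PiE B (\<lambda>_. UNIV)" and eq: "?Psi u = ?Psi u'"
    have "(\<Sum>v\<in>B. vscale (u v - u' v) v) = ?Psi u - ?Psi u'"
      by (simp add: sum_subtractf vscale_def algebra_simps fun_eq_iff sum_app finB)
    then have z: "(\<Sum>v\<in>B. vscale (u v - u' v) v) = 0" using eq by simp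
    have "u v = u' v" if "v \<in> B" for v
      using module.independentD[OF mod_vscale B(2) finB subset_refl z that] by simp
    then show "u = u'" using u u' by (intro PiE_ext) auto
  qed
  have "card D = card (PiE B (\<lambda>_. UNIV :: 'b set))" using card_image[OF inj] img by simp
  also have "\<dots> = CARD('b) ^ card B" using card_PiE[OF finB, of "\<lambda>_. UNIV :: 'b set"] by simp
  finally show ?thesis using cB by simp
qed

lemma supp: assumes v: "v \<in> Hsp N" and fx: "\<And>Y. Y \<in> Dm \<Longrightarrow> pauli p r N 1 0 Y v = v"
  and y: "y \<notin> Cm" shows "v y = 0"
proof (cases "y \<in> vecs N")
  case False then show ?thesis using v by (simp add: Hsp_def)
next
  case True
  then obtain i where i: "i < m" "block n i y \<notin> C" using y by (auto simp: blocks_in_def)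
  obtain d where d: "d \<in> dual n C" "trr (dotp n d (block n i y)) \<noteq> 0"
    using Dual1[of "block n i y"] i(2) by auto
  have dv: "d \<in> vecs n" using d(1) dual_vecs by blast
  have "dotp N y (emb n i d) = dotp n (block n i y) d" by (rule dotp_emb[OF i(1) dv])
  then have e: "dotp N (emb n i d) y = dotp n d (block n i y)" by (simp add: dotp_comm)
  have "pauli p r N 1 0 (emb n i d) v y = v y" using fx[OF emb_Dm[OF i(1) d(1)]] by simp
  then have "z (trr (dotp n d (block n i y))) * v y = v y" by (simp add: pauli_def e)
  moreover have "z (trr (dotp n d (block n i y))) \<noteq> 1" using zpow_eq_1[OF tr_Fp] d(2) by simp
  ultimately show ?thesis by (metis mult_cancel_right2)
qed

lemma fourier: assumes v: "v \<in> Hsp N" and fx: "\<And>X Y. X \<in> K \<Longrightarrow> Y \<in> Dm \<Longrightarrow> pauli p r N 1 X Y v = v"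
  shows "v \<in> module.span cscale Phis"
proof -
  have sp: "\<And>y. y \<notin> Cm \<Longrightarrow> v y = 0" using supp[OF v] fx[OF K_0] by blast
  have inv: "v (y - X) = v y" if "X \<in> K" for X y
    using fun_cong[OF fx[OF that Dm_0], of y] by (simp add: pauli_def)
  define \<alpha> where "\<alpha> \<Lambda> = (\<Sum>x\<in>Cm. z (- FL \<Lambda> x) * v x)" for \<Lambda>
  define \<beta> where "\<beta> = 1 / (cm * of_nat (card D) * of_nat (card K))"
  have bnz: "cm * of_nat (card D) * of_nat (card K) \<noteq> 0" using cm_nz card_D_pos card_K_pos by simp
  have key: "(\<Sum>\<Lambda>\<in>D. \<alpha> \<Lambda> * PH \<Lambda> y) = cm * of_nat (card D) * of_nat (card K) * v y" for y
  proof (cases "y \<in> Cm")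
    case False
    then show ?thesis using sp[OF False] by (simp add: Phi_eval)
  next
    case True
    have "(\<Sum>\<Lambda>\<in>D. \<alpha> \<Lambda> * PH \<Lambda> y) = (\<Sum>\<Lambda>\<in>D. \<Sum>x\<in>Cm. cm * v x * z (FL \<Lambda> (y - x)))"
    proof (rule sum.cong[OF refl])
      fix \<Lambda> assume L: "\<Lambda> \<in> D"
      have "\<alpha> \<Lambda> * PH \<Lambda> y = (\<Sum>x\<in>Cm. z (- FL \<Lambda> x) * v x * (cm * z (FL \<Lambda> y)))"
        unfolding \<alpha>_def Phi_eval using True by (simp add: sum_distrib_right)
      also have "\<dots> = (\<Sum>x\<in>Cm. cm * v x * z (FL \<Lambda> (y - x)))"
      proof (rule sum.cong[OF refl])
        fix x assume x: "x \<in> Cm"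
        have "z (FL \<Lambda> (y - x)) = z (FL \<Lambda> y) * z (- FL \<Lambda> x)"
          unfolding FL_diff[OF True x] by (rule zpow_diff[OF FL_val[OF True] FL_val[OF x]])
        then show "z (- FL \<Lambda> x) * v x * (cm * z (FL \<Lambda> y)) = cm * v x * z (FL \<Lambda> (y - x))" by simp
      qed
      finally show "\<alpha> \<Lambda> * PH \<Lambda> y = (\<Sum>x\<in>Cm. cm * v x * z (FL \<Lambda> (y - x)))" .
    qed
    also have "\<dots> = (\<Sum>x\<in>Cm. cm * v x * (\<Sum>\<Lambda>\<in>D. z (FL \<Lambda> (y - x))))"
      by (subst sum.swap) (simp add: sum_distrib_left)
    also have "\<dots> = (\<Sum>x\<in>Cm. if y - x \<in> K then cm * of_nat (card D) * v y else 0)"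
    proof (rule sum.cong[OF refl])
      fix x assume x: "x \<in> Cm"
      have yx: "y - x \<in> Cm" using Cm_diff[OF True x] .
      have "v x = v y" if "y - x \<in> K" using inv[OF that, of y] by simp
      then show "cm * v x * (\<Sum>\<Lambda>\<in>D. z (FL \<Lambda> (y - x))) = (if y - x \<in> K then cm * of_nat (card D) * v y else 0)"
        unfolding sum_D_char[OF yx] by simp
    qed
    also have "\<dots> = of_nat (card {x \<in> Cm. y - x \<in> K}) * (cm * of_nat (card D) * v y)"
      using finite_Cm by (simp add: sum.If_cases Int_def)
    also have "card {x \<in> Cm. y - x \<in> K} = card K"
    proof (rule bij_betw_same_card[of "\<lambda>x. y - x"], rule bij_betw_byWitness[of _ "\<lambda>k. y - k"])
      show "\<forall>a\<in>{x \<in> Cm. y - x \<in> K}. y - (y - a) = a" by simp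
      show "\<forall>a'\<in>K. y - (y - a') = a'" by simp
      show "(\<lambda>x. y - x) ` {x \<in> Cm. y - x \<in> K} \<subseteq> K" by auto
      show "(\<lambda>k. y - k) ` K \<subseteq> {x \<in> Cm. y - x \<in> K}" using K_Cm Cm_diff[OF True] by auto
    qed
    finally show ?thesis by (simp add: mult_ac)
  qed
  have "v = (\<Sum>\<Lambda>\<in>D. cscale (\<beta> * \<alpha> \<Lambda>) (PH \<Lambda>))"
  proof (rule ext)
    fix y
    have "(\<Sum>\<Lambda>\<in>D. cscale (\<beta> * \<alpha> \<Lambda>) (PH \<Lambda>)) y = \<beta> * (\<Sum>\<Lambda>\<in>D. \<alpha> \<Lambda> * PH \<Lambda> y)"
      by (simp add: sum_cscale_app[OF finite_D] sum_distrib_left mult_ac)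
    also have "\<dots> = v y" unfolding key \<beta>_def using bnz by simp
    finally show "v y = (\<Sum>\<Lambda>\<in>D. cscale (\<beta> * \<alpha> \<Lambda>) (PH \<Lambda>)) y" by simp
  qed
  also have "\<dots> \<in> module.span cscale Phis"
    by (intro module.span_sum[OF mod_cscale] module.span_scale[OF mod_cscale] Phi_in_span)
  finally show ?thesis .
qed

end


context qs begin

abbreviation "DT \<equiv> DTheta p r n m C \<kappa> D"
definition "Cset = {pauli p r N w U V | w U V. w \<in> phases p \<and> U \<in> Cm \<and> V \<in> DT}"
definition "SZset = {pauli p r N w X Y | w X Y. w \<in> phases p \<and> X \<in> K \<and> Y \<in> Dm}"

lemma DT_vecs: "V \<in> DT \<Longrightarrow> V \<in> vecs N" unfolding DTheta_def by blast

lemma S0_eq: "S0 = {pauli p r N 1 X Y | X Y. X \<in> K \<and> Y \<in> Dm}" unfolding S0_def K_def by blast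

lemma K_vecs: "X \<in> K \<Longrightarrow> X \<in> vecs N" using K_Cm Cm_vecs by blast

lemma trr_DT: assumes V: "V \<in> DT" and X: "X \<in> K" shows "trr (dotp N V X) = 0"
proof -
  obtain \<Lambda> where L: "\<Lambda> \<in> D" "\<forall>i<m. block n i V \<in> Theta p r n C (\<kappa> (\<Lambda> i))" using V unfolding DTheta_def by blast
  have XC: "X \<in> Cm" using X K_Cm by blast
  have "trr (dotp N V X) = (\<Sum>i<m. trr (dotp n (block n i V) (block n i X)))" by (simp add: dotp_blocks tr_sum)
  also have "\<dots> = (\<Sum>i<m. \<kappa> (\<Lambda> i) (block n i X))"
  proof (rule sum.cong[OF refl])
    fix i assume "i \<in> {..<m}"
    then have "block n i V \<in> Theta p r n C (\<kappa> (\<Lambda> i))" "block n i X \<in> C" using L XC by (auto simp: blocks_in_def)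
    then show "trr (dotp n (block n i V) (block n i X)) = \<kappa> (\<Lambda> i) (block n i X)"
      by (simp add: Theta_def dotp_comm)
  qed
  also have "\<dots> = FL \<Lambda> X" by (simp add: FLam_def)
  also have "\<dots> = 0" using X L(1) by (simp add: K_def)
  finally show ?thesis .
qed

lemma centralizer_eq: "centralizer (PG p r N) S0 = Cset"
proof
  show "centralizer (PG p r N) S0 \<subseteq> Cset"
  proof
    fix E :: "'a qstate \<Rightarrow> 'a qstate" assume E: "E \<in> centralizer (PG p r N) S0"
    then obtain w a b where Ed: "E = pauli p r N w a b" "w \<in> phases p" "a \<in> vecs N" "(b :: nat \<Rightarrow> 'a) \<in> vecs N"
      unfolding centralizer_def PG_def by blast
    have wn: "w \<noteq> 0" using phases_nz[OF Ed(2)] .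
    have comm: "trr (dotp N b X) = trr (dotp N Y a)" if "X \<in> K" "Y \<in> Dm" for X Y
    proof -
      have "pauli p r N 1 X Y \<in> S0" using that S0_eq by blast
      then have "E \<circ> pauli p r N 1 X Y = pauli p r N 1 X Y \<circ> E" using E unfolding centralizer_def by blast
      then show ?thesis using pauli_commute[OF wn, of 1 N a b X Y] Ed(1) by simp
    qed
    have aC: "a \<in> Cm" unfolding blocks_in_def
    proof (intro CollectI conjI allI impI)
      show "a \<in> vecs N" by (rule Ed(3))
      fix i assume i: "i < m"
      show "block n i a \<in> C"
      proof (rule Dual1)
        show "block n i a \<in> vecs n" by simp
        show "\<forall>d\<in>dual n C. trr (dotp n d (block n i a)) = 0"
        proof
          fix d assume d: "d \<in> dual n C"
          have dv: "d \<in> vecs n" using d dual_vecs by blast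
          have "dotp N a (emb n i d) = dotp n (block n i a) d" by (rule dotp_emb[OF i dv])
          then have "dotp N (emb n i d) a = dotp n d (block n i a)" by (simp add: dotp_comm)
          then show "trr (dotp n d (block n i a)) = 0" using comm[OF K_0 emb_Dm[OF i d]] by simp
        qed
      qed
    qed
    have bD: "b \<in> DT"
      by (rule Dual3[OF Ed(4)]) (use comm[OF _ Dm_0] in simp)
    show "E \<in> Cset" unfolding Cset_def using Ed aC bD by blast
  qed
next
  show "Cset \<subseteq> centralizer (PG p r N) S0"
  proof
    fix E :: "'a qstate \<Rightarrow> 'a qstate" assume "E \<in> Cset"
    then obtain w U V where Ed: "E = pauli p r N w U V" "w \<in> phases p" "U \<in> Cm" "V \<in> DT" unfolding Cset_def by blast
    have "E \<in> PG p r N" unfolding PG_def using Ed Cm_vecs DT_vecs by blast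
    moreover have "E \<circ> F = F \<circ> E" if F: "F \<in> S0" for F
    proof -
      obtain X Y where FX: "F = pauli p r N 1 X Y" "X \<in> K" "Y \<in> Dm" using F S0_eq by blast
      have "trr (dotp N V X) = trr (dotp N Y U)"
        using trr_DT[OF Ed(4) FX(2)] dotp_Dm_Cm[OF FX(3) Ed(3)] by simp
      then show ?thesis using pauli_commute[OF phases_nz[OF Ed(2)], of 1 N U V X Y] Ed(1) FX(1) by simp
    qed
    ultimately show "E \<in> centralizer (PG p r N) S0" unfolding centralizer_def by blast
  qed
qed

lemma SZ_eq: "setprod S0 (center (PG p r N)) = SZset"
proof
  show "setprod S0 (center (PG p r N)) \<subseteq> SZset"
  proof
    fix G assume "G \<in> setprod S0 (center (PG p r N))"
    then obtain E F where G: "G = E \<circ> F" "E \<in> S0" "F \<in> center (PG p r N)" unfolding setprod_def by blast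
    obtain X Y where EX: "E = pauli p r N 1 X Y" "X \<in> K" "Y \<in> Dm" using G(2) S0_eq by blast
    obtain w where Fw: "F = pauli p r N w 0 0" "w \<in> phases p" using G(3) center_PG by blast
    have "G = pauli p r N w X Y" using G(1) EX(1) Fw(1) by (simp add: pauli_comp)
    then show "G \<in> SZset" unfolding SZset_def using Fw EX by blast
  qed
next
  show "SZset \<subseteq> setprod S0 (center (PG p r N))"
  proof
    fix G assume "G \<in> SZset"
    then obtain w X Y where G: "G = pauli p r N w X Y" "w \<in> phases p" "X \<in> K" "Y \<in> Dm" unfolding SZset_def by blast
    have "G = pauli p r N 1 X Y \<circ> pauli p r N w 0 0" using G(1) by (simp add: pauli_comp)
    moreover have "pauli p r N 1 X Y \<in> S0" using G S0_eq by blast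
    moreover have "pauli p r N w 0 (0::nat \<Rightarrow> 'a) \<in> center (PG p r N)" using G(2) center_PG by blast
    ultimately show "G \<in> setprod S0 (center (PG p r N))" unfolding setprod_def by blast
  qed
qed

lemma in_diff: assumes "w \<in> phases p" "U \<in> vecs N" "V \<in> vecs N"
  shows "pauli p r N w U V \<in> Cset - SZset \<longleftrightarrow> U \<in> Cm \<and> V \<in> DT \<and> \<not> (U \<in> K \<and> V \<in> Dm)"
proof -
  have wn: "w \<noteq> 0" using phases_nz[OF assms(1)] .
  have c: "pauli p r N w U V \<in> Cset \<longleftrightarrow> U \<in> Cm \<and> V \<in> DT"
  proof
    assume "pauli p r N w U V \<in> Cset"
    then obtain w' U' V' where H: "pauli p r N w U V = pauli p r N w' U' V'" "U' \<in> Cm" "V' \<in> DT" unfolding Cset_def by blast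
    then show "U \<in> Cm \<and> V \<in> DT" using pauli_inj[OF wn assms(2) Cm_vecs[OF H(2)] assms(3) DT_vecs[OF H(3)] H(1)] by simp
  qed (use assms in \<open>auto simp: Cset_def\<close>)
  have s: "pauli p r N w U V \<in> SZset \<longleftrightarrow> U \<in> K \<and> V \<in> Dm"
  proof
    assume "pauli p r N w U V \<in> SZset"
    then obtain w' U' V' where H: "pauli p r N w U V = pauli p r N w' U' V'" "U' \<in> K" "V' \<in> Dm" unfolding SZset_def by blast
    then show "U \<in> K \<and> V \<in> Dm" using pauli_inj[OF wn assms(2) K_vecs[OF H(2)] assms(3) Dm_vecs[OF H(3)] H(1)] by simp
  qed (use assms in \<open>auto simp: SZset_def\<close>)
  show ?thesis using c s by blast
qed

end


context qs begin

definition "wt U V = card {j. j < N \<and> (U j \<noteq> 0 \<or> V j \<noteq> (0::'a))}"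
abbreviation "MD \<equiv> {hw n (x - y) | x y. x \<in> C \<and> y \<in> C \<and> x \<noteq> y}"
abbreviation "ELL \<equiv> hw N ` (DT - Dm)"

lemma C_nonzero: "\<exists>c\<in>C. c \<noteq> 0"
proof -
  obtain B where B: "B \<subseteq> C" "\<not> module.dependent vscale B" "card B = vector_space.dim vscale C"
    by (rule vector_space.basis_exists[OF vs_vscale, of C])
  have "card B = k" using B(3) dimC unfolding code_dim_def by simp
  then have "B \<noteq> {}" using k1 by auto
  then obtain b where b: "b \<in> B" by blast
  have "b \<noteq> 0"
  proof
    assume "b = 0"
    then have "0 \<in> B" using b by simp
    then have "module.dependent vscale B" by (rule module.dependent_zero[OF mod_vscale])
    then show False using B(2) by simp
  qed
  then show ?thesis using b B(1) by blast
qed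

lemma finite_MD: "finite MD"
proof -
  have "MD \<subseteq> (\<lambda>(x, y). hw n (x - y)) ` (C \<times> C)" by auto
  then show ?thesis using finite_C by (meson finite_SigmaI finite_imageI finite_subset)
qed

lemma md_le: "c \<in> C \<Longrightarrow> c \<noteq> 0 \<Longrightarrow> min_dist n C \<le> hw n c"
  unfolding min_dist_def using Cf(2) by (intro Min_le[OF finite_MD]) force

lemma md_in: "min_dist n C \<in> MD"
proof -
  obtain c where "c \<in> C" "c \<noteq> 0" using C_nonzero by blast
  then have "MD \<noteq> {}" using Cf(2) by force
  then show ?thesis unfolding min_dist_def using Min_in[OF finite_MD] by blast
qed

lemma DT_sub: "DT \<subseteq> vecs N" using DT_vecs by blast
lemma finite_ELL: "finite ELL" using finite_subset[OF DT_sub finite_vecs] by simp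

lemma ell_le: "V \<in> DT \<Longrightarrow> V \<notin> Dm \<Longrightarrow> ell p r n m C \<kappa> D \<le> hw N V"
  unfolding ell_def by (rule Min_le[OF finite_ELL]) blast

lemma finite_wt: "finite {j. j < N \<and> P j}" by simp

lemma hw_le_wt: "hw N V \<le> wt U V"
  unfolding hw_def wt_def by (rule card_mono) auto

lemma hw_block_le_wt: assumes i: "i < m" shows "hw n (block n i U) \<le> wt U V"
proof -
  have "hw n (block n i U) = card ((\<lambda>t. i * n + t) ` {t. t < n \<and> block n i U t \<noteq> 0})"
    unfolding hw_def by (subst card_image) (auto simp: inj_on_def)
  also have "\<dots> \<le> wt U V" unfolding wt_def
  proof (rule card_mono)
    show "finite {j. j < N \<and> (U j \<noteq> 0 \<or> V j \<noteq> 0)}" by simp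
    have "i * n + t < n * m" if "t < n" for t
    proof -
      have "i * n + t < i * n + n" using that by simp
      also have "\<dots> = (i + 1) * n" by simp
      also have "\<dots> \<le> m * n" using i by (intro mult_le_mono1) simp
      finally show ?thesis by (simp add: mult.commute)
    qed
    then show "(\<lambda>t. i * n + t) ` {t. t < n \<and> block n i U t \<noteq> 0} \<subseteq> {j. j < N \<and> (U j \<noteq> 0 \<or> V j \<noteq> 0)}"
      by (auto simp: block_def)
  qed
  finally show ?thesis .
qed

lemma lower: assumes U: "U \<in> Cm" and V: "V \<in> DT" and nd: "\<not> (U \<in> K \<and> V \<in> Dm)"
  shows "min (min_dist n C) (ell p r n m C \<kappa> D) \<le> wt U V"
proof (cases "U \<in> K")
  case False
  have "U \<noteq> 0" using False K_0 by auto
  then obtain i where i: "i < m" "block n i U \<noteq> 0" using blocks_zero[OF Cm_vecs[OF U]] by blast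
  have "block n i U \<in> C" using U i(1) by (simp add: blocks_in_def)
  then have "min_dist n C \<le> wt U V" using md_le i hw_block_le_wt[OF i(1)] order.trans by blast
  then show ?thesis by simp
next
  case True
  then have "V \<notin> Dm" using nd by blast
  then have "ell p r n m C \<kappa> D \<le> wt U V" using ell_le[OF V] hw_le_wt order.trans by blast
  then show ?thesis by simp
qed

lemma zero_DT: "0 \<in> DT"
proof -
  have "0 \<in> Theta p r n C (\<kappa> (0 i))" for i
    unfolding Theta_def by (simp add: kappa_0)
  then have "0 \<in> {X \<in> vecs N. \<forall>i<m. block n i X \<in> Theta p r n C (\<kappa> ((0::nat \<Rightarrow> 'b) i))}" by simp
  then show ?thesis unfolding DTheta_def using zero_D by blast
qed

lemma emb0: "emb n 0 c = (\<lambda>j. if j < n then c j else 0)" by (simp add: emb_def fun_eq_iff)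

lemma wit1: obtains c where "c \<in> C" "c \<noteq> 0" "hw n c = min_dist n C" "emb n 0 c \<notin> K"
proof -
  obtain x y where xy: "x \<in> C" "y \<in> C" "x \<noteq> y" "min_dist n C = hw n (x - y)" using md_in by blast
  define c where "c = x - y"
  have cC: "c \<in> C" and c0: "c \<noteq> 0" using xy Cf(5) by (auto simp: c_def)
  obtain j where j: "c j \<noteq> 0" using c0 by (auto simp: fun_eq_iff)
  obtain u0 :: 'a where u0: "trr u0 \<noteq> 0" using tr_nonzero by blast
  define cc where "cc = u0 / c j"
  define g where "g = (\<lambda>x. if x \<in> C then trr (x j * cc) else 0)"
  have "g \<in> lin_maps p C" unfolding lin_maps_def
  proof (intro CollectI conjI ballI allI impI)
    fix x y assume "x \<in> C" "y \<in> C"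
    then show "g (x + y) = g x + g y" using Cf(3) by (simp add: g_def algebra_simps tr_add)
  next
    fix a :: 'a and x assume "a \<in> Fp p" "x \<in> C"
    then show "g (vscale a x) = a * g x" using Cf(4) by (simp add: g_def vscale_def mult.assoc tr_smult)
  next
    fix x assume "x \<in> C" then show "g x \<in> Fp p" by (simp add: g_def)
  next
    fix x assume "x \<notin> C" then show "g x = 0" by (simp add: g_def)
  qed
  then obtain u where lam: "\<kappa> u = g" using kappa_surj by blast
  obtain d where d: "d \<in> D" "d 0 = 1" using D1 m_pos by blast
  have LD: "vscale u d \<in> D" using Df(4) d(1) by blast
  have "FL (vscale u d) (emb n 0 c) = \<kappa> (vscale u d 0) c" by (rule FL_emb[OF m_pos cC])
  also have "\<dots> = g c" using d(2) lam by (simp add: vscale_def)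
  also have "\<dots> = trr u0" using j cC by (simp add: g_def cc_def)
  finally have FLc: "FL (vscale u d) (emb n 0 c) = trr u0" .
  have "emb n 0 c \<notin> K"
  proof
    assume "emb n 0 c \<in> K"
    then have "FL (vscale u d) (emb n 0 c) = 0" using LD by (simp add: K_def)
    then show False using FLc u0 by simp
  qed
  have "hw n c = min_dist n C" using xy(4) by (simp add: c_def)
  then show ?thesis using that[OF cC c0] \<open>emb n 0 c \<notin> K\<close> by blast
qed

lemma wit2: "DT - Dm \<noteq> {}"
proof -
  obtain d where d: "d \<in> D" "d 0 = 1" using D1 m_pos by blast
  have ex: "\<forall>i. \<exists>x. i < m \<longrightarrow> x \<in> vecs n \<and> (\<forall>c\<in>C. \<kappa> (d i) c = trr (dotp n c x))"
  proof
    fix i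
    obtain x where "x \<in> vecs n" "\<forall>c\<in>C. \<kappa> (d i) c = trr (dotp n c x)" using Dual2[OF lm, of "d i"] by blast
    then show "\<exists>x. i < m \<longrightarrow> x \<in> vecs n \<and> (\<forall>c\<in>C. \<kappa> (d i) c = trr (dotp n c x))" by blast
  qed
  from choice[OF ex] obtain xs where xs0: "\<forall>i. i < m \<longrightarrow> xs i \<in> vecs n \<and> (\<forall>c\<in>C. \<kappa> (d i) c = trr (dotp n c (xs i)))"
    by blast
  have xs: "\<And>i. i < m \<Longrightarrow> xs i \<in> vecs n \<and> (\<forall>c\<in>C. \<kappa> (d i) c = trr (dotp n c (xs i)))"
    using xs0 by blast
  have n0: "n > 0" using kn by simp
  define V where "V = (\<lambda>j. if j < N then xs (j div n) (j mod n) else 0)"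
  have bV: "block n i V = xs i" if i: "i < m" for i
  proof (rule ext)
    fix t
    show "block n i V t = xs i t"
    proof (cases "t < n")
      case True
      have "i * n + t < n * m"
      proof -
        have "i * n + t < (i + 1) * n" using True by simp
        also have "\<dots> \<le> m * n" using i by (intro mult_le_mono1) simp
        finally show ?thesis by (simp add: mult.commute)
      qed
      then show ?thesis using True n0 by (simp add: block_def V_def)
    next
      case False
      then show ?thesis using xs[OF i] by (simp add: block_def vecs_def)
    qed
  qed
  have VN: "V \<in> vecs N" by (simp add: V_def vecs_def)
  have "V \<in> {X \<in> vecs N. \<forall>i<m. block n i X \<in> Theta p r n C (\<kappa> (d i))}"
    using VN bV xs by (simp add: Theta_def)
  then have "V \<in> DT" unfolding DTheta_def using d(1) by blast
  moreover have "V \<notin> Dm"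
  proof
    assume "V \<in> Dm"
    then have dual0: "xs 0 \<in> dual n C" using bV[OF m_pos] m_pos by (auto simp: blocks_in_def)
    have "\<kappa> 1 \<noteq> 0" using kappa_inj kappa_0 by (metis one_neq_zero)
    then obtain c where c: "\<kappa> 1 c \<noteq> 0" by (auto simp: fun_eq_iff)
    have cC: "c \<in> C" using c lm_out by force
    have "\<kappa> 1 c = trr (dotp n c (xs 0))" using xs[OF m_pos] cC d(2) by simp
    also have "dotp n c (xs 0) = 0" using dual0 cC by (simp add: dual_def)
    finally show False using c by simp
  qed
  ultimately show ?thesis by blast
qed

lemma ell_in: "\<exists>V \<in> DT - Dm. hw N V = ell p r n m C \<kappa> D"
proof -
  have "ELL \<noteq> {}" using wit2 by blast
  then show ?thesis unfolding ell_def using Min_in[OF finite_ELL] by force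
qed

lemma min_dist_main: "Min (pweight p r N ` (Cset - SZset)) = min (min_dist n C) (ell p r n m C \<kappa> D)"
proof -
  have finC: "finite Cset" using finite_subset[OF _ finite_PG[of N]] centralizer_eq unfolding centralizer_def by blast
  let ?W = "pweight p r N ` (Cset - SZset)"
  have fin: "finite ?W" using finC by simp
  obtain c where c: "c \<in> C" "c \<noteq> 0" "hw n c = min_dist n C" "emb n 0 c \<notin> K" using wit1 by blast
  have e0: "emb n 0 c \<in> Cm" using emb_Cm[OF m_pos c(1)] .
  have E1: "pauli p r N 1 (emb n 0 c) 0 \<in> Cset - SZset"
    using in_diff[OF phases_1 Cm_vecs[OF e0] vecs_0] e0 zero_DT c(4) by simp
  have w1: "pweight p r N (pauli p r N 1 (emb n 0 c) 0) = min_dist n C"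
  proof -
    have "pweight p r N (pauli p r N 1 (emb n 0 c) 0) = card {j. j < N \<and> (emb n 0 c j \<noteq> 0 \<or> (0::nat\<Rightarrow>'a) j \<noteq> 0)}"
      by (rule pweight_pauli[OF phases_1 Cm_vecs[OF e0] vecs_0])
    also have "\<dots> = card {j. j < n \<and> c j \<noteq> 0}"
    proof -
      have "n \<le> N" using m_pos by simp
      then have lt: "x < n \<Longrightarrow> x < N" for x by linarith
      show ?thesis unfolding emb0 using lt by (intro arg_cong[where f=card]) auto
    qed
    also have "\<dots> = hw n c" by (simp add: hw_def)
    finally show ?thesis using c(3) by simp
  qed
  obtain V where V: "V \<in> DT" "V \<notin> Dm" "hw N V = ell p r n m C \<kappa> D" using ell_in by blast
  have E2: "pauli p r N 1 0 V \<in> Cset - SZset"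
    using in_diff[OF phases_1 vecs_0 DT_vecs[OF V(1)]] Cm_0 V by simp
  have w2: "pweight p r N (pauli p r N 1 0 V) = ell p r n m C \<kappa> D"
    using pweight_pauli[OF phases_1 vecs_0 DT_vecs[OF V(1)]] V(3) by (simp add: hw_def)
  have ne: "?W \<noteq> {}" using E1 by blast
  have ge: "min (min_dist n C) (ell p r n m C \<kappa> D) \<le> Min ?W"
  proof (subst Min_ge_iff[OF fin ne], rule ballI)
    fix t assume "t \<in> ?W"
    then obtain E where E: "E \<in> Cset - SZset" "t = pweight p r N E" by blast
    then obtain w U V' where Ed: "E = pauli p r N w U V'" "w \<in> phases p" "U \<in> Cm" "V' \<in> DT"
      unfolding Cset_def by blast
    have "\<not> (U \<in> K \<and> V' \<in> Dm)" using in_diff[OF Ed(2) Cm_vecs[OF Ed(3)] DT_vecs[OF Ed(4)]] E(1) Ed(1) by simp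
    moreover have "t = wt U V'" using E(2) Ed pweight_pauli[OF Ed(2) Cm_vecs[OF Ed(3)] DT_vecs[OF Ed(4)]] by (simp add: wt_def)
    ultimately show "min (min_dist n C) (ell p r n m C \<kappa> D) \<le> t" using lower[OF Ed(3) Ed(4)] by simp
  qed
  have "Min ?W \<le> min_dist n C" using Min_le[OF fin] E1 w1 by (metis imageI)
  moreover have "Min ?W \<le> ell p r n m C \<kappa> D" using Min_le[OF fin] E2 w2 by (metis imageI)
  ultimately show ?thesis using ge by simp
qed

lemma Cset_ne_SZ: "SZset \<noteq> Cset"
proof -
  obtain c where c: "c \<in> C" "emb n 0 c \<notin> K" using wit1 by metis
  have e0: "emb n 0 c \<in> Cm" using emb_Cm[OF m_pos c(1)] .
  have "pauli p r N 1 (emb n 0 c) 0 \<in> Cset - SZset"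
    using in_diff[OF phases_1 Cm_vecs[OF e0] vecs_0] e0 zero_DT c(2) by simp
  then show ?thesis by blast
qed

end


context qs begin

lemma Hsp_subspace: "module.subspace cscale (Hsp N :: 'a qstate set)"
  unfolding module.subspace_def[OF mod_cscale] by (auto simp: Hsp_def cscale_def)

lemma main:
  "is_stabilizer_code p r N (module.span cscale Phis)
    \<and> vector_space.dim cscale (module.span cscale Phis) = CARD('a) ^ (k * s)
    \<and> stab_min_dist p r N (module.span cscale Phis) = min (min_dist n C) (ell p r n m C \<kappa> D)
    \<and> Stab p r N (module.span cscale Phis) = {pauli p r N 1 X Y | X Y.
          X \<in> {X \<in> blocks_in n m C. \<forall>\<Lambda>\<in>D. FLam n m \<kappa> \<Lambda> X = 0}
          \<and> Y \<in> blocks_in n m (dual n C)}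
    \<and> centralizer (PG p r N) (Stab p r N (module.span cscale Phis)) =
        {pauli p r N w U V | w U V. w \<in> phases p
          \<and> U \<in> blocks_in n m C \<and> V \<in> DTheta p r n m C \<kappa> D}"
proof (intro conjI)
  let ?Q = "module.span cscale Phis"
  have Qsub: "?Q \<subseteq> Hsp N"
    by (rule module.span_minimal[OF mod_cscale _ Hsp_subspace]) (use Phi_Hsp in blast)
  show "is_stabilizer_code p r N ?Q"
    unfolding is_stabilizer_code_def
  proof (intro conjI)
    show "?Q \<subseteq> Hsp N" by (rule Qsub)
    show "module.subspace cscale ?Q" by (rule module.subspace_span[OF mod_cscale])
    show "?Q = {v \<in> Hsp N. \<forall>E\<in>Stab p r N ?Q. E v = v}"
    proof
      show "?Q \<subseteq> {v \<in> Hsp N. \<forall>E\<in>Stab p r N ?Q. E v = v}" using Qsub unfolding Stab_def by blast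
      show "{v \<in> Hsp N. \<forall>E\<in>Stab p r N ?Q. E v = v} \<subseteq> ?Q"
      proof
        fix v assume v: "v \<in> {v \<in> Hsp N. \<forall>E\<in>Stab p r N ?Q. E v = v}"
        show "v \<in> ?Q"
        proof (rule fourier)
          show "v \<in> Hsp N" using v by blast
          fix X Y assume "X \<in> K" "Y \<in> Dm"
          then have "pauli p r N 1 X Y \<in> Stab p r N ?Q" unfolding Stab_eq S0_eq by blast
          then show "pauli p r N 1 X Y v = v" using v by blast
        qed
      qed
    qed
  qed
  show "vector_space.dim cscale ?Q = CARD('a) ^ (k * s)"
    unfolding dim_Q card_D cardB by (simp add: power_mult)
  show "stab_min_dist p r N ?Q = min (min_dist n C) (ell p r n m C \<kappa> D)"
    unfolding stab_min_dist_def Let_def Stab_eq centralizer_eq SZ_eq using Cset_ne_SZ min_dist_main by simp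
  show "Stab p r N ?Q = {pauli p r N 1 X Y | X Y.
          X \<in> {X \<in> blocks_in n m C. \<forall>\<Lambda>\<in>D. FLam n m \<kappa> \<Lambda> X = 0}
          \<and> Y \<in> blocks_in n m (dual n C)}"
    unfolding Stab_eq S0_def ..
  show "centralizer (PG p r N) (Stab p r N ?Q) =
        {pauli p r N w U V | w U V. w \<in> phases p
          \<and> U \<in> blocks_in n m C \<and> V \<in> DTheta p r n m C \<kappa> D}"
    unfolding Stab_eq centralizer_eq Cset_def ..
qed

end

theorem theorem3p3:
  fixes p r n m k s :: nat
    and C :: "(nat \<Rightarrow> 'a::{field,finite}) set"
    and D :: "(nat \<Rightarrow> 'b::{field,finite}) set"
    and \<kappa> :: "'b \<Rightarrow> (nat \<Rightarrow> 'a) \<Rightarrow> 'a"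
    and Q :: "'a qstate set"
  assumes "prime p" and "r \<ge> 1" and "CARD('a) = p ^ r"
    and "CARD('b) = CARD('a) ^ k"
    and "lin_code n C" and "code_dim C = k" and "1 \<le> k" and "k < n"
    and "lin_code m D" and "code_dim D = s" and "1 \<le> s" and "s < m"
    and "\<forall>i<m. \<exists>d\<in>D. d i = 1"
    and "\<forall>u v. \<kappa> (u + v) = \<kappa> u + \<kappa> v"
    and "\<forall>j::nat. \<forall>u. \<kappa> (of_nat j * u) = (\<lambda>x. of_nat j * \<kappa> u x)"
    and "bij_betw \<kappa> UNIV (lin_maps p C)"
    and "Q = module.span cscale {Phi p n m C \<kappa> \<Lambda> | \<Lambda>. \<Lambda> \<in> D}"
  shows "is_stabilizer_code p r (n * m) Q
    \<and> vector_space.dim cscale Q = CARD('a) ^ (k * s)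
    \<and> stab_min_dist p r (n * m) Q = min (min_dist n C) (ell p r n m C \<kappa> D)
    \<and> Stab p r (n * m) Q = {pauli p r (n * m) 1 X Y | X Y.
          X \<in> {X \<in> blocks_in n m C. \<forall>\<Lambda>\<in>D. FLam n m \<kappa> \<Lambda> X = 0}
          \<and> Y \<in> blocks_in n m (dual n C)}
    \<and> centralizer (PG p r (n * m)) (Stab p r (n * m) Q) =
        {pauli p r (n * m) w U V | w U V. w \<in> phases p
          \<and> U \<in> blocks_in n m C \<and> V \<in> DTheta p r n m C \<kappa> D}"
proof -
  interpret qs p r C n m k s D \<kappa>
    by (unfold_locales) (use assms in \<open>simp_all\<close>)
  show ?thesis unfolding assms(17) by (rule main)
qed


end
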